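(* Fix a real number $\beta>-1$ and let $\phi$ be an analytic self-map of $\mathbb{D}$ such that the composition operator $C_\phi f=f\circ\phi$ is complex symmetric on $A^2_\beta$. Then neither $C_\phi$ nor $C_\phi^*$ is hypercyclic.
   Context: $\mathbb{D}$ is the open unit disc. For $\beta>-1$, $A^2_\beta$ is the Hilbert space of analytic functions $f(z)=\sum_{n\ge0}\widehat f(n)z^n$ on $\mathbb{D}$ with inner product $\langle f,g\rangle=\sum_{n\ge0}\frac{n!\,\Gamma(2+\beta)}{\Gamma(n+2+\beta)}\widehat f(n)\overline{\widehat g(n)}$ (equivalently the $L^2$ inner product with respect to $(\beta+1)(1-|z|^2)^\beta dA(z)$). A conjugation is a conjugate-linear map $C$ with $C^2=I$ and $\langle Cf,Cg\rangle=\langle g,f\rangle$; a bounded operator $T$ is complex symmetric if $CT=T^*C$ for some conjugation $C$. An operator $T$ on a Hilbert space $\mathcal H$ is hypercyclic if there is $f\in\mathcal H$ whose orbit $\{T^nf:n\ge0\}$ is dense in $\mathcal H$. *)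

theory Defs
  imports "HOL-Analysis.Analysis"
begin

text \<open>Elements of the weighted Bergman space A^2_beta are represented by their
Taylor coefficient sequences f(z) = sum_n a n * z^n.\<close>

definition A2_weight :: "real \<Rightarrow> nat \<Rightarrow> real" where
  "A2_weight \<beta> n = fact n * Gamma (2 + \<beta>) / Gamma (real n + 2 + \<beta>)"

definition A2 :: "real \<Rightarrow> (nat \<Rightarrow> complex) set" where
  "A2 \<beta> = {a. summable (\<lambda>n. A2_weight \<beta> n * (cmod (a n))\<^sup>2)}"

definition A2_inner :: "real \<Rightarrow> (nat \<Rightarrow> complex) \<Rightarrow> (nat \<Rightarrow> complex) \<Rightarrow> complex" where
  "A2_inner \<beta> a b = (\<Sum>n. complex_of_real (A2_weight \<beta> n) * a n * cnj (b n))"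

definition A2_norm :: "real \<Rightarrow> (nat \<Rightarrow> complex) \<Rightarrow> real" where
  "A2_norm \<beta> a = sqrt (\<Sum>n. A2_weight \<beta> n * (cmod (a n))\<^sup>2)"

definition as_fun :: "(nat \<Rightarrow> complex) \<Rightarrow> complex \<Rightarrow> complex" where
  "as_fun a z = (\<Sum>n. a n * z ^ n)"

definition taylor_coeffs :: "(complex \<Rightarrow> complex) \<Rightarrow> nat \<Rightarrow> complex" where
  "taylor_coeffs f n = (deriv ^^ n) f 0 / fact n"

definition comp_op :: "(complex \<Rightarrow> complex) \<Rightarrow> (nat \<Rightarrow> complex) \<Rightarrow> (nat \<Rightarrow> complex)" where
  "comp_op \<phi> a = taylor_coeffs (\<lambda>z. as_fun a (\<phi> z))"

definition A2_adjoint :: "real \<Rightarrow> ((nat \<Rightarrow> complex) \<Rightarrow> (nat \<Rightarrow> complex)) \<Rightarrow> (nat \<Rightarrow> complex) \<Rightarrow> (nat \<Rightarrow> complex)" where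
  "A2_adjoint \<beta> T f = (THE h. h \<in> A2 \<beta> \<and> (\<forall>g\<in>A2 \<beta>. A2_inner \<beta> h g = A2_inner \<beta> f (T g)))"

definition A2_conjugation :: "real \<Rightarrow> ((nat \<Rightarrow> complex) \<Rightarrow> (nat \<Rightarrow> complex)) \<Rightarrow> bool" where
  "A2_conjugation \<beta> C \<longleftrightarrow>
     (\<forall>f\<in>A2 \<beta>. C f \<in> A2 \<beta>) \<and>
     (\<forall>f\<in>A2 \<beta>. \<forall>g\<in>A2 \<beta>. C (\<lambda>n. f n + g n) = (\<lambda>n. C f n + C g n)) \<and>
     (\<forall>c. \<forall>f\<in>A2 \<beta>. C (\<lambda>n. c * f n) = (\<lambda>n. cnj c * C f n)) \<and>
     (\<forall>f\<in>A2 \<beta>. C (C f) = f) \<and>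
     (\<forall>f\<in>A2 \<beta>. \<forall>g\<in>A2 \<beta>. A2_inner \<beta> (C f) (C g) = A2_inner \<beta> g f)"

definition A2_complex_symmetric :: "real \<Rightarrow> ((nat \<Rightarrow> complex) \<Rightarrow> (nat \<Rightarrow> complex)) \<Rightarrow> bool" where
  "A2_complex_symmetric \<beta> T \<longleftrightarrow>
     (\<exists>C. A2_conjugation \<beta> C \<and> (\<forall>f\<in>A2 \<beta>. C (T f) = A2_adjoint \<beta> T (C f)))"

definition A2_hypercyclic :: "real \<Rightarrow> ((nat \<Rightarrow> complex) \<Rightarrow> (nat \<Rightarrow> complex)) \<Rightarrow> bool" where
  "A2_hypercyclic \<beta> T \<longleftrightarrow>
     (\<exists>f\<in>A2 \<beta>. \<forall>g\<in>A2 \<beta>. \<forall>e>0. \<exists>n. A2_norm \<beta> (\<lambda>k. (T ^^ n) f k - g k) < e)"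

end

theory Submission
  imports Defs "HOL-Complex_Analysis.Complex_Analysis"
begin

definition E :: "real \<Rightarrow> complex" where "E t = exp (2 * of_real pi * \<i> * of_real t)"

lemma norm_E [simp]: "norm (E t) = 1"
  unfolding E_def by (simp add: norm_exp_eq_Re)

lemma E_nonzero [simp]: "E t \<noteq> 0"
  unfolding E_def by simp

lemma continuous_on_E [continuous_intros]: "continuous_on S E"
  unfolding E_def by (intro continuous_intros)

lemma circlepath_E: "circlepath 0 r t = of_real r * E t"
  by (simp add: circlepath E_def)

lemma mean_value:
  assumes "continuous_on (cball 0 r) g" "g holomorphic_on ball 0 r" "r > 0"
  shows "((\<lambda>t. g (of_real r * E t)) has_integral g 0) {0..1}"
proof -
  have "((\<lambda>u. g u/(u-0)) has_contour_integral (2 * of_real pi * \<i> * g 0)) (circlepath 0 r)"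
    by (rule Cauchy_integral_circlepath) (use assms in auto)
  hence "((\<lambda>t. g (circlepath 0 r t) / (circlepath 0 r t) * vector_derivative (circlepath 0 r) (at t))
          has_integral (2 * of_real pi * \<i> * g 0)) {0..1}"
    by (simp add: has_contour_integral)
  hence "((\<lambda>t. (2 * of_real pi * \<i>) * g (of_real r * E t)) has_integral (2 * of_real pi * \<i> * g 0)) {0..1}"
    apply (rule has_integral_eq[rotated])
    using assms(3) by (simp add: circlepath_E vector_derivative_circlepath E_def field_simps)
  from has_integral_mult_right[OF this, of "1/(2 * of_real pi * \<i>)"]
  show ?thesis by (simp add: field_simps)
qed

lemma E_cnj_mult [simp]: "E t * cnj (E t) = 1" "cnj (E t) * E t = 1"
proof -
  show "E t * cnj (E t) = 1" using complex_norm_square[of "E t"] by simp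
  thus "cnj (E t) * E t = 1" by (simp add: mult.commute)
qed

lemma has_integral_cnj: "(f has_integral I) S \<Longrightarrow> ((\<lambda>x. cnj (f x)) has_integral cnj I) S"
  using has_integral_linear[OF _ bounded_linear_cnj] by (simp add: o_def)

lemma coeff_integral:
  assumes hol: "h holomorphic_on ball 0 1" and r: "0 < r" "r < 1"
  shows "((\<lambda>t. h (of_real r * E t) * cnj (E t) ^ m) has_integral (taylor_coeffs h m * of_real r ^ m)) {0..1}"
proof -
  have sub: "cball 0 r \<subseteq> ball (0::complex) 1" using r by auto
  have cont: "continuous_on (cball 0 r) h"
    using holomorphic_on_imp_continuous_on[OF hol] continuous_on_subset sub by blast
  have hb: "h holomorphic_on ball 0 r" by (rule holomorphic_on_subset[OF hol]) (use r in auto)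
  have "((\<lambda>u. h u / (u-0) ^ (Suc m)) has_contour_integral ((2 * pi * \<i>) / (fact m) * (deriv ^^ m) h 0))
           (circlepath 0 r)"
    by (rule Cauchy_has_contour_integral_higher_derivative_circlepath[OF cont hb]) (use r in auto)
  hence "((\<lambda>t. h (circlepath 0 r t) / (circlepath 0 r t) ^ Suc m * vector_derivative (circlepath 0 r) (at t))
          has_integral ((2 * pi * \<i>) / (fact m) * (deriv ^^ m) h 0)) {0..1}"
    by (simp add: has_contour_integral)
  hence "((\<lambda>t. (2 * pi * \<i> / of_real r ^ m) * (h (of_real r * E t) * cnj (E t) ^ m))
          has_integral ((2 * pi * \<i>) / (fact m) * (deriv ^^ m) h 0)) {0..1}"
  proof (rule has_integral_eq[rotated])
    fix t
    have e: "cnj (E t) ^ m = inverse (E t ^ m)"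
      by (metis E_cnj_mult(1) inverse_unique power_inverse)
    show "h (circlepath 0 r t) / (circlepath 0 r t) ^ Suc m * vector_derivative (circlepath 0 r) (at t)
          = (2 * pi * \<i> / of_real r ^ m) * (h (of_real r * E t) * cnj (E t) ^ m)"
    proof -
      have vd: "vector_derivative (circlepath 0 r) (at t) = 2 * pi * \<i> * r * E t"
        by (simp add: vector_derivative_circlepath E_def)
      have gen: "(H::complex) / (of_real r * z) ^ Suc m * (c * of_real r * z) = c / of_real r ^ m * (H * inverse (z ^ m))"
        if "z \<noteq> 0" for H z c using that r by (simp add: divide_simps)
      show ?thesis unfolding vd circlepath_E e by (rule gen) simp
    qed
  qed
  from has_integral_mult_right[OF this, of "of_real r ^ m / (2 * pi * \<i>)"]
  show ?thesis using r by (simp add: taylor_coeffs_def field_simps)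
qed

lemma E_orth: "((\<lambda>t. E t ^ j * cnj (E t) ^ k) has_integral (if j = k then 1 else 0)) {0..1}"
proof -
  have main: "((\<lambda>t. E t ^ j * cnj (E t) ^ k) has_integral (if j = k then 1 else 0)) {0..1}" if "k \<le> j" for j k
  proof -
    have eq: "E t ^ j * cnj (E t) ^ k = E t ^ (j - k)" for t
    proof -
      have "E t ^ j = E t ^ (j - k) * E t ^ k" using that by (simp flip: power_add)
      hence "E t ^ j * cnj (E t) ^ k = E t ^ (j - k) * (E t ^ k * cnj (E t) ^ k)"
        by (simp add: mult.assoc)
      also have "E t ^ k * cnj (E t) ^ k = (E t * cnj (E t)) ^ k" by (simp only: power_mult_distrib)
      finally show ?thesis by simp
    qed
    have "((\<lambda>t. (\<lambda>u. u ^ (j - k)) (of_real 1 * E t)) has_integral (\<lambda>u. u ^ (j - k)) 0) {0..1}"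
      by (rule mean_value) (auto intro!: continuous_intros holomorphic_intros)
    moreover have "E t ^ k * cnj (E t) ^ k = 1" for t
      by (metis E_cnj_mult(1) power_mult_distrib power_one)
    moreover have "j \<noteq> k \<Longrightarrow> (0::complex) ^ (j - k) = 0" using that by simp
    ultimately show ?thesis using that by (cases "j = k") (simp_all add: eq)
  qed
  show ?thesis
  proof (cases "k \<le> j")
    case True thus ?thesis using main by blast
  next
    case False
    from has_integral_cnj[OF main[of j k]] False
    show ?thesis by (simp add: mult.commute)
  qed
qed

lemma poly_circle:
  fixes b :: "nat \<Rightarrow> complex"
  shows "((\<lambda>t. (\<Sum>m<M. b m * E t ^ m) * cnj (\<Sum>m<M. b m * E t ^ m)) has_integral
           of_real (\<Sum>m<M. (cmod (b m))\<^sup>2)) {0..1}"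
proof -
  have eq: "(\<Sum>m<M. b m * E t ^ m) * cnj (\<Sum>m<M. b m * E t ^ m) =
        (\<Sum>j<M. \<Sum>k<M. (b j * cnj (b k)) * (E t ^ j * cnj (E t) ^ k))" for t
    by (simp add: sum_product cnj_sum mult_ac)
  have H: "((\<lambda>t. \<Sum>j<M. \<Sum>k<M. (b j * cnj (b k)) * (E t ^ j * cnj (E t) ^ k)) has_integral
          (\<Sum>j<M. \<Sum>k<M. (b j * cnj (b k)) * (if j = k then 1 else 0))) {0..1}"
    by (intro has_integral_sum finite_lessThan has_integral_mult_right E_orth)
  have V1: "(\<Sum>j<M. \<Sum>k<M. (b j * cnj (b k)) * (if j = k then 1 else 0)) =
                 (\<Sum>j<M. b j * cnj (b j))"
    by (simp add: if_distrib cong: if_cong)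
  have V2: "(\<Sum>j<M. b j * cnj (b j)) = of_real (\<Sum>m<M. (cmod (b m))\<^sup>2)"
    by (simp only: of_real_sum complex_norm_square)
  show ?thesis unfolding eq using H[unfolded V1 V2] .
qed

lemma bessel:
  assumes cont: "continuous_on {0..1} F"
    and coef: "\<And>m. m < M \<Longrightarrow> ((\<lambda>t. F t * cnj (E t) ^ m) has_integral b m) {0..1}"
  shows "(\<Sum>m<M. (cmod (b m))\<^sup>2) \<le> integral {0..1} (\<lambda>t. (cmod (F t))\<^sup>2)"
proof -
  define Q where "Q t = (\<Sum>m<M. b m * E t ^ m)" for t
  define S where "S = (\<Sum>m<M. (cmod (b m))\<^sup>2)"
  define A where "A = integral {0..1} (\<lambda>t. (cmod (F t))\<^sup>2)"
  have contQ: "continuous_on {0..1} Q" unfolding Q_def by (intro continuous_intros)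
  have I1: "((\<lambda>t. F t * cnj (Q t)) has_integral of_real S) {0..1}"
  proof -
    have "((\<lambda>t. \<Sum>m<M. cnj (b m) * (F t * cnj (E t) ^ m)) has_integral (\<Sum>m<M. cnj (b m) * b m)) {0..1}"
      by (intro has_integral_sum finite_lessThan has_integral_mult_right coef) auto
    moreover have "F t * cnj (Q t) = (\<Sum>m<M. cnj (b m) * (F t * cnj (E t) ^ m))" for t
      by (simp add: Q_def cnj_sum sum_distrib_left mult_ac)
    moreover have "(\<Sum>m<M. cnj (b m) * b m) = of_real S"
    proof -
      have "(\<Sum>m<M. cnj (b m) * b m) = (\<Sum>m<M. b m * cnj (b m))" by (simp add: mult.commute)
      also have "\<dots> = of_real S" unfolding S_def by (simp only: of_real_sum complex_norm_square)
      finally show ?thesis .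
    qed
    ultimately show ?thesis by simp
  qed
  have I2: "((\<lambda>t. Q t * cnj (F t)) has_integral of_real S) {0..1}"
    using has_integral_cnj[OF I1] by (simp add: mult.commute)
  have I3: "((\<lambda>t. Q t * cnj (Q t)) has_integral of_real S) {0..1}"
    unfolding Q_def S_def by (rule poly_circle)
  have "(\<lambda>t. (cmod (F t))\<^sup>2) integrable_on {0..1}"
    by (intro integrable_continuous_interval continuous_intros cont)
  hence "((\<lambda>t. (cmod (F t))\<^sup>2) has_integral A) {0..1}" unfolding A_def
    using integrable_integral by blast
  from has_integral_of_real[OF this, where 'b=complex]
  have I0: "((\<lambda>t. F t * cnj (F t)) has_integral of_real A) {0..1}"
    unfolding complex_norm_square .
  have "((\<lambda>t. F t * cnj (F t) - F t * cnj (Q t) - Q t * cnj (F t) + Q t * cnj (Q t)) has_integral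
          (of_real A - of_real S - of_real S + of_real S)) {0..1}"
    by (intro has_integral_add has_integral_diff I0 I1 I2 I3)
  moreover have "F t * cnj (F t) - F t * cnj (Q t) - Q t * cnj (F t) + Q t * cnj (Q t) =
                 of_real ((cmod (F t - Q t))\<^sup>2)" for t
    unfolding complex_norm_square by (simp add: algebra_simps)
  ultimately have G1: "((\<lambda>t. of_real ((cmod (F t - Q t))\<^sup>2) :: complex) has_integral of_real (A - S)) {0..1}"
    by simp
  have "(\<lambda>t. (cmod (F t - Q t))\<^sup>2) integrable_on {0..1}"
    by (intro integrable_continuous_interval continuous_intros cont contQ)
  then obtain B where B: "((\<lambda>t. (cmod (F t - Q t))\<^sup>2) has_integral B) {0..1}"
    by blast
  have "B \<ge> 0" by (rule has_integral_nonneg[OF B]) auto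
  from has_integral_of_real[OF B, where 'b=complex] G1 have "(of_real B :: complex) = of_real (A - S)"
    using has_integral_unique by blast
  hence "B = A - S" by (metis of_real_eq_iff)
  with \<open>B \<ge> 0\<close> show ?thesis unfolding A_def S_def by simp
qed

lemma Gamma_plus1_pos: "(x::real) > 0 \<Longrightarrow> Gamma (x + 1) = x * Gamma x"
  by (rule Gamma_plus1) (auto elim!: nonpos_Ints_cases)

lemma w_pos: "\<beta> > -1 \<Longrightarrow> A2_weight \<beta> n > 0"
  unfolding A2_weight_def by (intro divide_pos_pos mult_pos_pos Gamma_real_pos) auto

lemma w_Suc: assumes "\<beta> > -1"
  shows "A2_weight \<beta> (Suc n) = A2_weight \<beta> n * (real n + 1) / (real n + 2 + \<beta>)"
proof -
  have "Gamma (real (Suc n) + 2 + \<beta>) = (real n + 2 + \<beta>) * Gamma (real n + 2 + \<beta>)"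
    using Gamma_plus1_pos[of "real n + 2 + \<beta>"] assms by (simp add: algebra_simps)
  moreover have "Gamma (real n + 2 + \<beta>) > 0" using assms by (intro Gamma_real_pos) auto
  ultimately show ?thesis using assms unfolding A2_weight_def
    by (simp add: field_simps)
qed

lemma w_Beta: assumes "\<beta> > -1"
  shows "A2_weight \<beta> n = (\<beta> + 1) * Beta (real n + 1) (\<beta> + 1)"
proof -
  have g1: "Gamma (real n + 1) = fact n" using Gamma_fact[of n] by (simp add: add.commute)
  have g2: "Gamma (\<beta> + 2) = (\<beta> + 1) * Gamma (\<beta> + 1)"
    using Gamma_plus1_pos[of "\<beta> + 1"] assms by (simp add: algebra_simps)
  show ?thesis unfolding A2_weight_def Beta_def g1
    by (simp add: add.commute add.left_commute g2 mult.commute)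
qed

lemma summable_inv_w:
  assumes b: "\<beta> > -1" and x: "0 \<le> x" "x < 1"
  shows "summable (\<lambda>n. x ^ n / A2_weight \<beta> n)"
proof (rule summable_ratio_test)
  define c where "c = (1 + x) / 2"
  define N where "N = nat \<lceil>2 * (2 + \<beta>) / (1 - x)\<rceil>"
  show "c < 1" using x by (simp add: c_def)
  fix n assume n: "n \<ge> N"
  have wp: "A2_weight \<beta> n > 0" using w_pos[OF b] .
  have "real n \<ge> 2 * (2 + \<beta>) / (1 - x)" using n unfolding N_def by linarith
  hence "real n * (1 - x) \<ge> 2 * (2 + \<beta>)" using x by (simp add: field_simps)
  hence h1: "real n - real n * x \<ge> 4 + 2 * \<beta>" by (simp add: algebra_simps)
  have "x * (1 + \<beta>) \<le> 1 * (1 + \<beta>)" using x b by (intro mult_right_mono) auto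
  hence h2: "x + x * \<beta> \<le> 1 + \<beta>" by (simp add: algebra_simps)
  have key: "x * (real n + 2 + \<beta>) \<le> c * (real n + 1)"
    unfolding c_def using h1 h2 x by (simp add: algebra_simps divide_simps)
  have wp1: "A2_weight \<beta> (Suc n) > 0" using w_pos[OF b] .
  have "norm (x ^ Suc n / A2_weight \<beta> (Suc n)) = x ^ Suc n / A2_weight \<beta> (Suc n)"
    using x wp1 by simp
  also have "\<dots> = x ^ n / A2_weight \<beta> n * (x * (real n + 2 + \<beta>) / (real n + 1))"
    using x b wp by (simp add: w_Suc field_simps)
  also have "\<dots> \<le> x ^ n / A2_weight \<beta> n * c"
    using key x wp by (intro mult_left_mono) (auto simp: field_simps)
  also have "\<dots> = c * norm (x ^ n / A2_weight \<beta> n)" using x wp by simp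
  finally show "norm (x ^ Suc n / A2_weight \<beta> (Suc n)) \<le> c * norm (x ^ n / A2_weight \<beta> n)" .
qed

lemma amgm_w: fixes w a p :: real assumes "w > 0" shows "2 * (a * p) \<le> w * a\<^sup>2 + p\<^sup>2 / w"
proof -
  have "w * a\<^sup>2 + p\<^sup>2 / w - 2 * (a * p) = (w * a - p)\<^sup>2 / w"
    using assms by (simp add: field_simps power2_eq_square)
  moreover have "(w * a - p)\<^sup>2 / w \<ge> 0" using assms by simp
  ultimately show ?thesis by linarith
qed

lemma A2_summable_abs:
  assumes b: "\<beta> > -1" and a: "a \<in> A2 \<beta>" and x: "0 \<le> x" "x < 1"
  shows "summable (\<lambda>n. cmod (a n) * x ^ n)"
proof (rule summable_comparison_test[where g = "\<lambda>n. (A2_weight \<beta> n * (cmod (a n))\<^sup>2 + (x\<^sup>2) ^ n / A2_weight \<beta> n) / 2"])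
  show "\<exists>N. \<forall>n\<ge>N. norm (cmod (a n) * x ^ n) \<le> (A2_weight \<beta> n * (cmod (a n))\<^sup>2 + (x\<^sup>2) ^ n / A2_weight \<beta> n) / 2"
  proof (intro exI allI impI)
    fix n
    have "2 * (cmod (a n) * x ^ n) \<le> A2_weight \<beta> n * (cmod (a n))\<^sup>2 + (x ^ n)\<^sup>2 / A2_weight \<beta> n"
      by (rule amgm_w[OF w_pos[OF b]])
    thus "norm (cmod (a n) * x ^ n) \<le> (A2_weight \<beta> n * (cmod (a n))\<^sup>2 + (x\<^sup>2) ^ n / A2_weight \<beta> n) / 2"
      using x by (simp add: power_mult[symmetric] power_mult_distrib mult.commute)
  qed
  show "summable (\<lambda>n. (A2_weight \<beta> n * (cmod (a n))\<^sup>2 + (x\<^sup>2) ^ n / A2_weight \<beta> n) / 2)"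
    using a summable_inv_w[OF b, of "x\<^sup>2"] x unfolding A2_def
    by (intro summable_divide summable_add) (auto simp: power_less_one_iff abs_square_less_1)
qed

lemma A2_summable_at:
  assumes b: "\<beta> > -1" and a: "a \<in> A2 \<beta>" and z: "norm z < 1"
  shows "summable (\<lambda>n. a n * z ^ n)"
proof (rule summable_norm_cancel)
  show "summable (\<lambda>n. norm (a n * z ^ n))"
    using A2_summable_abs[OF b a _ z] by (simp add: norm_mult norm_power)
qed

lemma as_fun_holo:
  assumes b: "\<beta> > -1" and a: "a \<in> A2 \<beta>"
  shows "as_fun a holomorphic_on ball 0 1"
proof -
  have "as_fun a field_differentiable (at z)" if z: "norm z < 1" for z
  proof -
    define K :: complex where "K = of_real ((1 + norm z) / 2)"
    have nK: "norm K = (1 + norm z) / 2" unfolding K_def by (simp only: norm_of_real) simp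
    have "summable (\<lambda>n. a n * K ^ n)" by (rule A2_summable_at[OF b a]) (use z nK in simp)
    from termdiffs_strong[OF this, of z] z nK
    have "DERIV (\<lambda>x. \<Sum>n. a n * x ^ n) z :> (\<Sum>n. diffs a n * z ^ n)" by simp
    thus ?thesis unfolding as_fun_def[abs_def] field_differentiable_def by blast
  qed
  thus ?thesis
    by (auto simp: holomorphic_on_def intro: field_differentiable_at_within)
qed

lemma poly_circle_real:
  fixes b :: "nat \<Rightarrow> complex"
  shows "((\<lambda>t. (cmod (\<Sum>m<M. b m * E t ^ m))\<^sup>2) has_integral (\<Sum>m<M. (cmod (b m))\<^sup>2)) {0..1}"
proof -
  have "(\<lambda>t. (cmod (\<Sum>m<M. b m * E t ^ m))\<^sup>2) integrable_on {0..1}"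
    by (intro integrable_continuous_interval continuous_intros)
  then obtain I where I: "((\<lambda>t. (cmod (\<Sum>m<M. b m * E t ^ m))\<^sup>2) has_integral I) {0..1}" by blast
  from has_integral_of_real[OF I, where 'b=complex]
  have "((\<lambda>t. (\<Sum>m<M. b m * E t ^ m) * cnj (\<Sum>m<M. b m * E t ^ m)) has_integral of_real I) {0..1}"
    unfolding complex_norm_square .
  with poly_circle[of b M] have "(of_real I :: complex) = of_real (\<Sum>m<M. (cmod (b m))\<^sup>2)"
    using has_integral_unique by blast
  hence "I = (\<Sum>m<M. (cmod (b m))\<^sup>2)" by (metis of_real_eq_iff)
  with I show ?thesis by simp
qed

lemma parseval_as_fun:
  assumes b: "\<beta> > -1" and a: "a \<in> A2 \<beta>" and R: "0 \<le> R" "R < 1"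
  shows "(\<lambda>n. (cmod (a n))\<^sup>2 * R ^ (2 * n)) sums integral {0..1} (\<lambda>t. (cmod (as_fun a (of_real R * E t)))\<^sup>2)"
proof -
  define P where "P N t = (\<Sum>n<N. a n * (of_real R * E t) ^ n)" for N t
  define f where "f t = as_fun a (of_real R * E t)" for t
  have ul: "uniform_limit {0..1} P f sequentially"
    unfolding P_def f_def as_fun_def
  proof (rule Weierstrass_m_test)
    show "summable (\<lambda>n. cmod (a n) * R ^ n)" by (rule A2_summable_abs[OF b a R])
    fix n t show "norm (a n * (of_real R * E t) ^ n) \<le> cmod (a n) * R ^ n"
      using R by (simp add: norm_mult norm_power)
  qed
  have hol: "as_fun a holomorphic_on ball 0 1" by (rule as_fun_holo[OF b a])
  have contf: "continuous_on {0..1} f"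
    unfolding f_def
    by (rule continuous_on_compose2[OF holomorphic_on_imp_continuous_on[OF hol]])
       (use R in \<open>auto intro!: continuous_intros simp: norm_mult\<close>)
  have bf: "bounded ((\<lambda>t. norm (f t)) ` {0..1})"
    by (intro compact_imp_bounded compact_continuous_image continuous_intros contf) auto
  have ul2: "uniform_limit {0..1} (\<lambda>N t. norm (P N t) * norm (P N t)) (\<lambda>t. norm (f t) * norm (f t)) sequentially"
    by (intro uniform_lim_mult uniform_limit_norm ul bf)
  have contP: "continuous_on {0..1} (\<lambda>t. norm (P N t) * norm (P N t))" for N
    unfolding P_def by (intro continuous_intros)
  obtain I J where IJ: "\<And>N. ((\<lambda>t. norm (P N t) * norm (P N t)) has_integral I N) {0..1}"
      "((\<lambda>t. norm (f t) * norm (f t)) has_integral J) {0..1}" "I \<longlonglongrightarrow> J"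
    using uniform_limit_integral[OF ul2 contP] by auto
  have PN: "P N t = (\<Sum>n<N. (a n * of_real R ^ n) * E t ^ n)" for N t
    unfolding P_def by (simp add: power_mult_distrib mult_ac)
  have "I N = (\<Sum>n<N. (cmod (a n * of_real R ^ n))\<^sup>2)" for N
  proof -
    have "((\<lambda>t. norm (P N t) * norm (P N t)) has_integral (\<Sum>n<N. (cmod (a n * of_real R ^ n))\<^sup>2)) {0..1}"
      using poly_circle_real[of "\<lambda>n. a n * of_real R ^ n" N] unfolding PN by (simp add: power2_eq_square)
    with IJ(1) show ?thesis using has_integral_unique by blast
  qed
  moreover have "(cmod (a n * of_real R ^ n))\<^sup>2 = (cmod (a n))\<^sup>2 * R ^ (2 * n)" for n
    using R by (simp add: norm_mult norm_power power_mult_distrib power_mult[symmetric] mult.commute)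
  ultimately have "I = (\<lambda>N. \<Sum>n<N. (cmod (a n))\<^sup>2 * R ^ (2 * n))" by (intro ext) simp
  with IJ(3) have "(\<lambda>n. (cmod (a n))\<^sup>2 * R ^ (2 * n)) sums J" unfolding sums_def by simp
  moreover have "J = integral {0..1} (\<lambda>t. (cmod (as_fun a (of_real R * E t)))\<^sup>2)"
    using IJ(2) unfolding f_def by (simp add: power2_eq_square integral_unique)
  ultimately show ?thesis by simp
qed

definition Pk :: "real \<Rightarrow> complex \<Rightarrow> complex \<Rightarrow> real" where
  "Pk R w \<xi> = (R\<^sup>2 - (cmod w)\<^sup>2) / (cmod (\<xi> - w))\<^sup>2"

lemma norm_RE [simp]: "R \<ge> 0 \<Longrightarrow> norm (of_real R * E t) = R"
  by (simp add: norm_mult)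

lemma poisson_identity:
  fixes \<xi> w :: complex
  assumes xi: "\<xi> * cnj \<xi> = of_real (R\<^sup>2)" and ne: "\<xi> \<noteq> w" and nz: "\<xi> \<noteq> 0"
  shows "\<xi> / (\<xi> - w) + cnj w * \<xi> / (of_real (R\<^sup>2) - cnj w * \<xi>) = of_real (Pk R w \<xi>)"
proof -
  have ne': "cnj \<xi> - cnj w \<noteq> 0" using ne by (metis complex_cnj_cancel_iff eq_iff_diff_eq_0)
  have ne'': "\<xi> - w \<noteq> 0" using ne by simp
  have "of_real (Pk R w \<xi>) = (\<xi> * cnj \<xi> - w * cnj w) / ((\<xi> - w) * cnj (\<xi> - w))"
    by (simp only: Pk_def of_real_divide of_real_diff complex_norm_square xi[symmetric])
  also have "\<dots> = (\<xi> * (cnj \<xi> - cnj w) + cnj w * (\<xi> - w)) / ((\<xi> - w) * (cnj \<xi> - cnj w))"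
    by (simp add: algebra_simps)
  also have "\<dots> = \<xi> / (\<xi> - w) + cnj w / (cnj \<xi> - cnj w)"
    using add_frac_eq[OF ne'' ne', of \<xi> "cnj w"] by simp
  also have "cnj w / (cnj \<xi> - cnj w) = cnj w * \<xi> / (\<xi> * (cnj \<xi> - cnj w))"
    using nz by simp
  also have "\<xi> * (cnj \<xi> - cnj w) = \<xi> * cnj \<xi> - cnj w * \<xi>" by (simp add: algebra_simps)
  finally show ?thesis using xi by simp
qed

lemma poisson:
  assumes hol: "f holomorphic_on ball 0 1" and R: "0 < R" "R < 1" and w: "norm w < R"
  shows "((\<lambda>s. f (of_real R * E s) * of_real (Pk R w (of_real R * E s))) has_integral f w) {0..1}"
proof -
  have sub: "cball 0 R \<subseteq> ball (0::complex) 1" using R by auto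
  have cont: "continuous_on (cball 0 R) f"
    using holomorphic_on_imp_continuous_on[OF hol] continuous_on_subset sub by blast
  have hb: "f holomorphic_on ball 0 R" by (rule holomorphic_on_subset[OF hol]) (use R in auto)
  have "((\<lambda>u. f u/(u-w)) has_contour_integral (2 * of_real pi * \<i> * f w)) (circlepath 0 R)"
    by (rule Cauchy_integral_circlepath[OF cont hb]) (use w in auto)
  hence "((\<lambda>t. f (circlepath 0 R t) / (circlepath 0 R t - w) * vector_derivative (circlepath 0 R) (at t))
          has_integral (2 * of_real pi * \<i> * f w)) {0..1}"
    by (simp add: has_contour_integral)
  hence "((\<lambda>t. (2 * of_real pi * \<i>) * (f (of_real R * E t) * ((of_real R * E t) / (of_real R * E t - w))))
          has_integral (2 * of_real pi * \<i> * f w)) {0..1}"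
  proof (rule has_integral_eq[rotated])
    fix t
    have vd: "vector_derivative (circlepath 0 R) (at t) = 2 * pi * \<i> * R * E t"
      by (simp add: vector_derivative_circlepath E_def)
    show "f (circlepath 0 R t) / (circlepath 0 R t - w) * vector_derivative (circlepath 0 R) (at t) =
          (2 * of_real pi * \<i>) * (f (of_real R * E t) * ((of_real R * E t) / (of_real R * E t - w)))"
      unfolding vd circlepath_E by (simp add: field_simps)
  qed
  from has_integral_mult_right[OF this, of "1/(2 * of_real pi * \<i>)"]
  have I1: "((\<lambda>t. f (of_real R * E t) * ((of_real R * E t) / (of_real R * E t - w)))
          has_integral f w) {0..1}" by (simp add: field_simps)
  define g where "g u = f u * (cnj w * u / (of_real (R\<^sup>2) - cnj w * u))" for u
  have den: "of_real (R\<^sup>2) - cnj w * u \<noteq> 0" if "norm u \<le> R" for u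
  proof
    assume "of_real (R\<^sup>2) - cnj w * u = 0"
    hence "norm (cnj w * u) = R\<^sup>2" by (metis eq_iff_diff_eq_0 norm_of_real abs_power2)
    moreover have "norm (cnj w * u) < R * R"
    proof -
      have "norm (cnj w * u) = norm w * norm u" by (simp add: norm_mult)
      also have "\<dots> < R * R" using w that R
        by (metis mult_strict_right_mono mult_le_cancel_left_pos mult_pos_pos norm_ge_zero
                  order.strict_trans1 order.strict_trans2 mult_left_mono mult_less_cancel_right_disj)
      finally show ?thesis .
    qed
    ultimately show False by (simp add: power2_eq_square)
  qed
  have "((\<lambda>t. g (of_real R * E t)) has_integral g 0) {0..1}"
  proof (rule mean_value[OF _ _ R(1)])
    show "continuous_on (cball 0 R) g" unfolding g_def
      by (intro continuous_intros cont) (use den in auto)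
    show "g holomorphic_on ball 0 R" unfolding g_def
      by (intro holomorphic_intros hb) (use den in auto)
  qed
  hence I2: "((\<lambda>t. g (of_real R * E t)) has_integral 0) {0..1}" by (simp add: g_def)
  have "((\<lambda>t. f (of_real R * E t) * ((of_real R * E t) / (of_real R * E t - w)) + g (of_real R * E t))
          has_integral f w) {0..1}"
    using has_integral_add[OF I1 I2] by simp
  thus ?thesis
  proof (rule has_integral_eq[rotated])
    fix t
    define \<xi> where "\<xi> = of_real R * E t"
    have n\<xi>: "norm \<xi> = R" using R by (simp add: \<xi>_def)
    have xi: "\<xi> * cnj \<xi> = of_real (R\<^sup>2)" using n\<xi> complex_norm_square[of \<xi>] by simp
    have ne: "\<xi> \<noteq> w" using n\<xi> w by auto
    have nz: "\<xi> \<noteq> 0" using n\<xi> R by auto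
    have "f \<xi> * (\<xi> / (\<xi> - w)) + g \<xi> = f \<xi> * (\<xi> / (\<xi> - w) + cnj w * \<xi> / (of_real (R\<^sup>2) - cnj w * \<xi>))"
      by (simp add: g_def algebra_simps)
    also have "\<dots> = f \<xi> * of_real (Pk R w \<xi>)" using poisson_identity[OF xi ne nz] by simp
    finally show "f (of_real R * E t) * ((of_real R * E t) / (of_real R * E t - w)) + g (of_real R * E t) =
                  f (of_real R * E t) * of_real (Pk R w (of_real R * E t))" by (simp add: \<xi>_def)
  qed
qed

lemma Pk_nonneg: "norm w \<le> R \<Longrightarrow> Pk R w \<xi> \<ge> 0"
  unfolding Pk_def by (intro divide_nonneg_nonneg) (auto intro: power_mono)

lemma Pk_integral:
  assumes R: "0 < R" "R < 1" and w: "norm w < R"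
  shows "((\<lambda>s. Pk R w (of_real R * E s)) has_integral 1) {0..1}"
proof -
  have "((\<lambda>s. (\<lambda>_. 1::complex) (of_real R * E s) * of_real (Pk R w (of_real R * E s))) has_integral 1) {0..1}"
    using poisson[of "\<lambda>_. 1" R w] R w by simp
  from has_integral_linear[OF this bounded_linear_Re] show ?thesis by (simp add: o_def)
qed

lemma cont_Pk_circle:
  assumes "0 < R" "norm w < R"
  shows "continuous_on S (\<lambda>s. Pk R w (of_real R * E s))"
proof -
  have "(cmod (of_real R * E s - w))\<^sup>2 \<noteq> 0" for s
  proof -
    have "norm (of_real R * E s) = R" using assms by simp
    hence "of_real R * E s \<noteq> w" using assms by auto
    thus ?thesis by simp
  qed
  thus ?thesis unfolding Pk_def by (intro continuous_intros) auto
qed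

lemma poisson_cs:
  assumes hol: "f holomorphic_on ball 0 1" and R: "0 < R" "R < 1" and w: "norm w < R"
  shows "(cmod (f w))\<^sup>2 \<le> integral {0..1} (\<lambda>s. (cmod (f (of_real R * E s)))\<^sup>2 * Pk R w (of_real R * E s))"
proof -
  define F where "F s = f (of_real R * E s)" for s
  define p where "p s = Pk R w (of_real R * E s)" for s
  define m where "m = f w"
  define A where "A = integral {0..1} (\<lambda>s. (cmod (F s))\<^sup>2 * p s)"
  have sub: "cball 0 R \<subseteq> ball (0::complex) 1" using R by auto
  have contF: "continuous_on {0..1} F" unfolding F_def
    by (rule continuous_on_compose2[OF holomorphic_on_imp_continuous_on[OF hol]])
       (use R in \<open>auto intro!: continuous_intros simp: norm_mult\<close>)
  have contp: "continuous_on {0..1} p" unfolding p_def by (rule cont_Pk_circle) (use R w in auto)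
  have pnn: "p s \<ge> 0" for s unfolding p_def by (rule Pk_nonneg) (use w in auto)
  have J1: "((\<lambda>s. F s * of_real (p s)) has_integral m) {0..1}"
    unfolding F_def p_def m_def by (rule poisson[OF hol R w])
  have J1': "((\<lambda>s. F s * of_real (p s) * cnj m) has_integral m * cnj m) {0..1}"
    using has_integral_mult_left[OF J1] .
  have J2: "((\<lambda>s. m * (cnj (F s) * of_real (p s))) has_integral m * cnj m) {0..1}"
    using has_integral_mult_right[OF has_integral_cnj[OF J1], of m] by simp
  have J3: "((\<lambda>s. m * cnj m * of_real (p s)) has_integral m * cnj m) {0..1}"
  proof -
    have P1: "((\<lambda>s. of_real (p s) :: complex) has_integral 1) {0..1}"
      using has_integral_of_real[OF Pk_integral[OF R w]] unfolding p_def by simp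
    show ?thesis using has_integral_mult_right[OF P1, of "m * cnj m"] by simp
  qed
  have "(\<lambda>s. (cmod (F s))\<^sup>2 * p s) integrable_on {0..1}"
    by (intro integrable_continuous_interval continuous_intros contF contp)
  hence "((\<lambda>s. (cmod (F s))\<^sup>2 * p s) has_integral A) {0..1}" unfolding A_def
    using integrable_integral by blast
  from has_integral_of_real[OF this, where 'b=complex]
  have J0: "((\<lambda>s. F s * cnj (F s) * of_real (p s)) has_integral of_real A) {0..1}"
    unfolding of_real_mult complex_norm_square .
  have "((\<lambda>s. F s * cnj (F s) * of_real (p s) - F s * of_real (p s) * cnj m
             - m * (cnj (F s) * of_real (p s)) + m * cnj m * of_real (p s)) has_integral
          (of_real A - m * cnj m - m * cnj m + m * cnj m)) {0..1}"
    by (intro has_integral_add has_integral_diff J0 J1' J2 J3)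
  moreover have "F s * cnj (F s) * of_real (p s) - F s * of_real (p s) * cnj m
             - m * (cnj (F s) * of_real (p s)) + m * cnj m * of_real (p s) =
                 of_real ((cmod (F s - m))\<^sup>2 * p s)" for s
    unfolding of_real_mult complex_norm_square by (simp add: algebra_simps)
  ultimately have G0: "((\<lambda>s. of_real ((cmod (F s - m))\<^sup>2 * p s) :: complex) has_integral
                         (of_real A - m * cnj m)) {0..1}"
    by simp
  have mm: "m * cnj m = of_real ((cmod m)\<^sup>2)" by (simp only: complex_norm_square)
  have G1: "((\<lambda>s. of_real ((cmod (F s - m))\<^sup>2 * p s) :: complex) has_integral
                         of_real (A - (cmod m)\<^sup>2)) {0..1}"
    using G0 unfolding mm of_real_diff[symmetric] .
  have "(\<lambda>s. (cmod (F s - m))\<^sup>2 * p s) integrable_on {0..1}"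
    by (intro integrable_continuous_interval continuous_intros contF contp)
  then obtain B where B: "((\<lambda>s. (cmod (F s - m))\<^sup>2 * p s) has_integral B) {0..1}"
    by blast
  have "B \<ge> 0" by (rule has_integral_nonneg[OF B]) (use pnn in auto)
  from has_integral_of_real[OF B, where 'b=complex] G1 have "(of_real B :: complex) = of_real (A - (cmod m)\<^sup>2)"
    using has_integral_unique by blast
  hence "B = A - (cmod m)\<^sup>2" by (metis of_real_eq_iff)
  with \<open>B \<ge> 0\<close> show ?thesis unfolding A_def F_def p_def m_def by simp
qed

lemma Pk_Re:
  assumes "cmod \<xi> = R"
  shows "Pk R w \<xi> = Re ((\<xi> + w) / (\<xi> - w))"
proof -
  have n1: "R\<^sup>2 = (Re \<xi>)\<^sup>2 + (Im \<xi>)\<^sup>2" using assms cmod_power2[of \<xi>] by simp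
  have n2: "(cmod w)\<^sup>2 = (Re w)\<^sup>2 + (Im w)\<^sup>2" by (rule cmod_power2)
  have n3: "(cmod (\<xi> - w))\<^sup>2 = (Re (\<xi> - w))\<^sup>2 + (Im (\<xi> - w))\<^sup>2" by (rule cmod_power2)
  have num: "R\<^sup>2 - (cmod w)\<^sup>2 = Re (\<xi> + w) * Re (\<xi> - w) + Im (\<xi> + w) * Im (\<xi> - w)"
    unfolding n1 n2 by (simp add: algebra_simps power2_eq_square)
  show ?thesis unfolding Pk_def Re_divide num n3 ..
qed

lemma Pk_mean:
  assumes hol: "\<phi> holomorphic_on ball 0 1" and r: "0 < r" "r < 1"
    and bnd: "\<And>z. norm z \<le> r \<Longrightarrow> norm (\<phi> z) < R" and xi: "cmod \<xi> = R"
  shows "((\<lambda>t. Pk R (\<phi> (of_real r * E t)) \<xi>) has_integral Pk R (\<phi> 0) \<xi>) {0..1}"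
proof -
  define g where "g z = (\<xi> + \<phi> z) / (\<xi> - \<phi> z)" for z
  have sub: "cball 0 r \<subseteq> ball (0::complex) 1" using r by auto
  have cont: "continuous_on (cball 0 r) \<phi>"
    using holomorphic_on_imp_continuous_on[OF hol] continuous_on_subset sub by blast
  have hb: "\<phi> holomorphic_on ball 0 r" by (rule holomorphic_on_subset[OF hol]) (use r in auto)
  have ne: "\<xi> - \<phi> z \<noteq> 0" if "norm z \<le> r" for z
    using bnd[OF that] xi by auto
  have "((\<lambda>t. g (of_real r * E t)) has_integral g 0) {0..1}"
  proof (rule mean_value[OF _ _ r(1)])
    show "continuous_on (cball 0 r) g" unfolding g_def
      by (intro continuous_intros cont) (use ne in auto)
    show "g holomorphic_on ball 0 r" unfolding g_def
      by (intro holomorphic_intros hb) (use ne in auto)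
  qed
  from has_integral_linear[OF this bounded_linear_Re]
  have "((\<lambda>t. Re (g (of_real r * E t))) has_integral Re (g 0)) {0..1}" by (simp add: o_def)
  thus ?thesis unfolding g_def using Pk_Re[OF xi] by simp
qed

lemma Pk_bound:
  assumes xi: "cmod \<xi> = R" and c: "cmod c < R"
  shows "Pk R c \<xi> \<le> (R + cmod c) / (R - cmod c)"
proof -
  have "R - cmod c \<le> cmod (\<xi> - c)" using xi norm_triangle_ineq2[of \<xi> c] by simp
  moreover have "R - cmod c > 0" using c by simp
  ultimately have d: "(R - cmod c)\<^sup>2 \<le> (cmod (\<xi> - c))\<^sup>2" by (intro power_mono) auto
  have d2: "(cmod (\<xi> - c))\<^sup>2 > 0" using xi c by auto
  have nn: "R\<^sup>2 - (cmod c)\<^sup>2 \<ge> 0" using c by (intro power_mono diff_ge_0_iff_ge[THEN iffD2]) auto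
  have "Pk R c \<xi> \<le> (R\<^sup>2 - (cmod c)\<^sup>2) / (R - cmod c)\<^sup>2"
    unfolding Pk_def using d nn d2 \<open>R - cmod c > 0\<close> by (intro divide_left_mono mult_pos_pos) auto
  also have "\<dots> = (R + cmod c) / (R - cmod c)"
  proof -
    have "R\<^sup>2 - (cmod c)\<^sup>2 = (R + cmod c) * (R - cmod c)" by (simp add: power2_eq_square algebra_simps)
    moreover have "(R - cmod c)\<^sup>2 = (R - cmod c) * (R - cmod c)" by (simp add: power2_eq_square)
    ultimately show ?thesis using \<open>R - cmod c > 0\<close> by simp
  qed
  finally show ?thesis .
qed

lemma circle_littlewood:
  assumes b: "\<beta> > -1" and a: "a \<in> A2 \<beta>"
    and hol\<phi>: "\<phi> holomorphic_on ball 0 1" and maps: "\<phi> ` ball 0 1 \<subseteq> ball 0 1"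
    and r: "0 < r" "r < 1" and R: "0 < R" "R < 1"
    and bnd: "\<And>z. norm z \<le> r \<Longrightarrow> norm (\<phi> z) < R"
  shows "(\<Sum>m<M. (cmod (taylor_coeffs (\<lambda>z. as_fun a (\<phi> z)) m))\<^sup>2 * r ^ (2 * m))
          \<le> (R + cmod (\<phi> 0)) / (R - cmod (\<phi> 0)) * (\<Sum>n. (cmod (a n))\<^sup>2 * R ^ (2 * n))"
proof -
  define f where "f = as_fun a"
  define h where "h z = f (\<phi> z)" for z
  define c where "c = \<phi> 0"
  define K where "K = (R + cmod c) / (R - cmod c)"
  have c: "cmod c < R" unfolding c_def using bnd[of 0] r by simp
  have holf: "f holomorphic_on ball 0 1" unfolding f_def by (rule as_fun_holo[OF b a])
  have holh: "h holomorphic_on ball 0 1" unfolding h_def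
    using holomorphic_on_compose[OF hol\<phi> holomorphic_on_subset[OF holf maps]] by (simp add: o_def)
  have contf: "continuous_on (ball 0 1) f" using holomorphic_on_imp_continuous_on[OF holf] .
  have cont\<phi>: "continuous_on (ball 0 1) \<phi>" using holomorphic_on_imp_continuous_on[OF hol\<phi>] .
  have contph: "continuous_on UNIV (\<lambda>t. \<phi> (of_real r * E t))"
    by (rule continuous_on_compose2[OF cont\<phi>]) (use r in \<open>auto intro!: continuous_intros simp: norm_mult\<close>)
  have contfR: "continuous_on UNIV (\<lambda>s. f (of_real R * E s))"
    by (rule continuous_on_compose2[OF contf]) (use R in \<open>auto intro!: continuous_intros simp: norm_mult\<close>)
  have phb: "norm (\<phi> (of_real r * E t)) < R" for t by (rule bnd) (use r in simp)
  define F where "F t = h (of_real r * E t)" for t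
  have contF: "continuous_on {0..1} F" unfolding F_def h_def
    using continuous_on_compose2[OF contf contph] maps phb r
    by (smt (verit, ccfv_SIG) R(2) UNIV_I continuous_on_subset image_subset_iff mem_ball_0 subsetI)
  have bes: "(\<Sum>m<M. (cmod (taylor_coeffs h m * of_real r ^ m))\<^sup>2) \<le> integral {0..1} (\<lambda>t. (cmod (F t))\<^sup>2)"
    by (rule bessel[OF contF]) (unfold F_def, rule coeff_integral[OF holh r])
  have h_eq: "h = (\<lambda>z. as_fun a (\<phi> z))" by (simp add: h_def f_def fun_eq_iff)
  have lhs: "(\<Sum>m<M. (cmod (taylor_coeffs h m * of_real r ^ m))\<^sup>2) =
             (\<Sum>m<M. (cmod (taylor_coeffs (\<lambda>z. as_fun a (\<phi> z)) m))\<^sup>2 * r ^ (2 * m))"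
    using r by (simp add: h_eq norm_mult norm_power power_mult_distrib power_mult[symmetric] mult.commute)
  define G where "G t s = (cmod (f (of_real R * E s)))\<^sup>2 * Pk R (\<phi> (of_real r * E t)) (of_real R * E s)" for t s
  have neq: "of_real R * E s - \<phi> (of_real r * E t) \<noteq> 0" for s t
  proof -
    have "norm (of_real R * E s) = R" using R by simp
    thus ?thesis using phb[of t] by auto
  qed
  have contG: "continuous_on UNIV (\<lambda>(t, s). G t s)"
  proof -
    have c1: "continuous_on UNIV (\<lambda>x::real\<times>real. \<phi> (of_real r * E (fst x)))"
      by (rule continuous_on_compose2[OF contph]) (auto intro!: continuous_intros)
    have c2: "continuous_on UNIV (\<lambda>x::real\<times>real. f (of_real R * E (snd x)))"
      by (rule continuous_on_compose2[OF contfR]) (auto intro!: continuous_intros)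
    have cE: "continuous_on UNIV (\<lambda>x::real\<times>real. E (snd x))"
      unfolding E_def by (intro continuous_intros)
    have "continuous_on UNIV (\<lambda>x::real\<times>real. G (fst x) (snd x))"
      unfolding G_def Pk_def by (intro continuous_intros c1 c2 cE) (use neq in auto)
    thus ?thesis by (simp add: case_prod_beta')
  qed
  have contG': "continuous_on (cbox (0,0) (1,1)) (\<lambda>(t, s). G t s)"
    using contG continuous_on_subset by blast
  have pw: "(cmod (F t))\<^sup>2 \<le> integral {0..1} (G t)" for t
    unfolding F_def h_def G_def by (rule poisson_cs[OF holf R phb])
  have intG: "(\<lambda>t. integral {0..1} (G t)) integrable_on {0..1}"
  proof -
    have "continuous_on {0..1} (\<lambda>t. integral (cbox 0 1) (G t))"
      by (rule integral_continuous_on_param) (use contG continuous_on_subset in \<open>auto simp: case_prod_beta'\<close>)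
    thus ?thesis by (intro integrable_continuous_interval) simp
  qed
  have step1: "integral {0..1} (\<lambda>t. (cmod (F t))\<^sup>2) \<le> integral {0..1} (\<lambda>t. integral {0..1} (G t))"
    by (rule integral_le[OF _ intG pw]) (intro integrable_continuous_interval continuous_intros contF)
  have swap: "integral {0..1} (\<lambda>t. integral {0..1} (G t)) = integral {0..1} (\<lambda>s. integral {0..1} (\<lambda>t. G t s))"
    using integral_swap_continuous[OF contG'] by simp
  have nRE: "norm (of_real R * E s) = R" for s using R by simp
  have inner: "integral {0..1} (\<lambda>t. G t s) = (cmod (f (of_real R * E s)))\<^sup>2 * Pk R c (of_real R * E s)" for s
  proof -
    have "((\<lambda>t. Pk R (\<phi> (of_real r * E t)) (of_real R * E s)) has_integral Pk R c (of_real R * E s)) {0..1}"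
      unfolding c_def by (rule Pk_mean[OF hol\<phi> r bnd nRE])
    from has_integral_mult_right[OF this, of "(cmod (f (of_real R * E s)))\<^sup>2"]
    show ?thesis unfolding G_def by (rule integral_unique)
  qed
  have step2: "integral {0..1} (\<lambda>s. (cmod (f (of_real R * E s)))\<^sup>2 * Pk R c (of_real R * E s))
             \<le> integral {0..1} (\<lambda>s. K * (cmod (f (of_real R * E s)))\<^sup>2)"
  proof (rule integral_le)
    show "(\<lambda>s. (cmod (f (of_real R * E s)))\<^sup>2 * Pk R c (of_real R * E s)) integrable_on {0..1}"
      by (intro integrable_continuous_interval continuous_intros cont_Pk_circle R c
             continuous_on_subset[OF contfR]) auto
    show "(\<lambda>s. K * (cmod (f (of_real R * E s)))\<^sup>2) integrable_on {0..1}"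
      by (intro integrable_continuous_interval continuous_intros continuous_on_subset[OF contfR]) auto
    fix s
    have "Pk R c (of_real R * E s) \<le> K" unfolding K_def by (rule Pk_bound) (use R c in simp_all)
    thus "(cmod (f (of_real R * E s)))\<^sup>2 * Pk R c (of_real R * E s) \<le> K * (cmod (f (of_real R * E s)))\<^sup>2"
      by (simp add: mult.commute mult_right_mono)
  qed
  have par: "integral {0..1} (\<lambda>s. (cmod (f (of_real R * E s)))\<^sup>2) = (\<Sum>n. (cmod (a n))\<^sup>2 * R ^ (2 * n))"
    using parseval_as_fun[OF b a, of R] R unfolding f_def by (simp add: sums_iff)
  have "(\<Sum>m<M. (cmod (taylor_coeffs (\<lambda>z. as_fun a (\<phi> z)) m))\<^sup>2 * r ^ (2 * m))
        \<le> integral {0..1} (\<lambda>s. K * (cmod (f (of_real R * E s)))\<^sup>2)"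
    using bes step1 step2 lhs swap inner by simp
  also have "\<dots> = K * (\<Sum>n. (cmod (a n))\<^sup>2 * R ^ (2 * n))" by (simp add: par)
  finally show ?thesis unfolding K_def c_def .
qed

lemma mob_identity:
  "(cmod (1 - cnj c * u))\<^sup>2 - (cmod (c - u))\<^sup>2 = (1 - (cmod c)\<^sup>2) * (1 - (cmod u)\<^sup>2)"
  unfolding cmod_power2 by (simp add: algebra_simps power2_eq_square)

lemma mob_den:
  assumes "cmod c < 1" "cmod u < 1" shows "1 - cnj c * u \<noteq> 0"
proof
  assume "1 - cnj c * u = 0"
  hence "cnj c * u = 1" by simp
  hence "cmod c * cmod u = 1" by (metis complex_mod_cnj norm_mult norm_one)
  moreover have "cmod c * cmod u < 1" using assms
    by (metis mult_strict_mono' norm_ge_zero mult_1_left order.strict_implies_order)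
  ultimately show False by simp
qed

lemma mob_norm:
  assumes "cmod c < 1" "cmod u < 1"
  shows "1 - (cmod ((c - u) / (1 - cnj c * u)))\<^sup>2 = (1 - (cmod c)\<^sup>2) * (1 - (cmod u)\<^sup>2) / (cmod (1 - cnj c * u))\<^sup>2"
proof -
  have d: "cmod (1 - cnj c * u) > 0" using mob_den[OF assms] by simp
  have "1 - (cmod ((c - u) / (1 - cnj c * u)))\<^sup>2 = ((cmod (1 - cnj c * u))\<^sup>2 - (cmod (c - u))\<^sup>2) / (cmod (1 - cnj c * u))\<^sup>2"
    using d by (simp add: norm_divide power_divide field_simps)
  thus ?thesis unfolding mob_identity .
qed

lemma mob_invol:
  assumes "cmod c < 1" "cmod u < 1"
  shows "(c - (c - u) / (1 - cnj c * u)) / (1 - cnj c * ((c - u) / (1 - cnj c * u))) = u"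
proof -
  have d: "1 - cnj c * u \<noteq> 0" using mob_den[OF assms] .
  have cc: "1 - cnj c * c \<noteq> 0"
  proof -
    have "cnj c * c = of_real ((cmod c)\<^sup>2)" by (metis complex_norm_square mult.commute)
    moreover have "(cmod c)\<^sup>2 < 1" using assms by (simp add: power_less_one_iff abs_square_less_1)
    ultimately show ?thesis by (metis eq_iff_diff_eq_0 less_irrefl of_real_eq_1_iff)
  qed
  have num: "c - (c - u) / (1 - cnj c * u) = u * (1 - cnj c * c) / (1 - cnj c * u)"
    using d by (simp add: field_simps)
  have den: "1 - cnj c * ((c - u) / (1 - cnj c * u)) = (1 - cnj c * c) / (1 - cnj c * u)"
    using d by (simp add: field_simps)
  have gen: "(u * X / D) / (X / D) = u" if "X \<noteq> 0" "D \<noteq> 0" for X D :: complex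
    using that by (simp add: field_simps)
  show ?thesis unfolding num den using gen[OF cc d] .
qed

lemma schwarz_pick_bound:
  assumes hol: "\<phi> holomorphic_on ball 0 1" and maps: "\<phi> ` ball 0 1 \<subseteq> ball 0 1" and z: "cmod z < 1"
  shows "1 - (cmod (\<phi> z))\<^sup>2 \<ge> (1 - (cmod (\<phi> 0))\<^sup>2) / 4 * (1 - (cmod z)\<^sup>2)"
proof -
  define c where "c = \<phi> 0"
  have c: "cmod c < 1" using maps unfolding c_def image_subset_iff by (metis centre_in_ball mem_ball_0 zero_less_one)
  have \<phi>b: "cmod (\<phi> w) < 1" if "cmod w < 1" for w using maps that unfolding image_subset_iff by (metis mem_ball_0)
  define \<psi> where "\<psi> w = (c - \<phi> w) / (1 - cnj c * \<phi> w)" for w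
  have hol\<psi>: "\<psi> holomorphic_on ball 0 1" unfolding \<psi>_def
    by (intro holomorphic_intros hol) (use mob_den[OF c] \<phi>b in auto)
  have \<psi>0: "\<psi> 0 = 0" unfolding \<psi>_def c_def by simp
  have \<psi>b: "cmod (\<psi> w) < 1" if "cmod w < 1" for w
  proof -
    have "1 - (cmod (\<psi> w))\<^sup>2 = (1 - (cmod c)\<^sup>2) * (1 - (cmod (\<phi> w))\<^sup>2) / (cmod (1 - cnj c * \<phi> w))\<^sup>2"
      unfolding \<psi>_def by (rule mob_norm[OF c \<phi>b[OF that]])
    moreover have "(1 - (cmod c)\<^sup>2) > 0" "(1 - (cmod (\<phi> w))\<^sup>2) > 0"
      using c \<phi>b[OF that] by (simp_all add: power_less_one_iff abs_square_less_1)
    moreover have "(cmod (1 - cnj c * \<phi> w))\<^sup>2 > 0" using mob_den[OF c \<phi>b[OF that]] by simp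
    ultimately have "1 - (cmod (\<psi> w))\<^sup>2 > 0" by simp
    hence "(cmod (\<psi> w))\<^sup>2 < 1" by simp
    thus ?thesis by (simp add: power_less_one_iff abs_square_less_1)
  qed
  have sch: "cmod (\<psi> z) \<le> cmod z"
    using Schwarz_Lemma'[OF hol\<psi> \<psi>0 \<psi>b] z by blast
  define v where "v = \<psi> z"
  have v: "cmod v < 1" unfolding v_def using \<psi>b[OF z] .
  have \<phi>v: "\<phi> z = (c - v) / (1 - cnj c * v)"
    unfolding v_def \<psi>_def using mob_invol[OF c \<phi>b[OF z]] by simp
  have "1 - (cmod (\<phi> z))\<^sup>2 = (1 - (cmod c)\<^sup>2) * (1 - (cmod v)\<^sup>2) / (cmod (1 - cnj c * v))\<^sup>2"
    unfolding \<phi>v by (rule mob_norm[OF c v])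
  moreover have "(cmod (1 - cnj c * v))\<^sup>2 \<le> 4"
  proof -
    have "cmod (1 - cnj c * v) \<le> 1 + cmod c * cmod v"
      using norm_triangle_ineq4[of 1 "cnj c * v"] by (simp add: norm_mult)
    also have "\<dots> \<le> 2" using mult_le_one[of "cmod c" "cmod v"] c v by simp
    finally have "cmod (1 - cnj c * v) \<le> 2" .
    hence "(cmod (1 - cnj c * v))\<^sup>2 \<le> 2\<^sup>2" by (intro power_mono) auto
    thus ?thesis by simp
  qed
  moreover have "(cmod (1 - cnj c * v))\<^sup>2 > 0" using mob_den[OF c v] by simp
  moreover have "1 - (cmod v)\<^sup>2 \<ge> 1 - (cmod z)\<^sup>2"
    using sch unfolding v_def by (simp add: power_mono)
  moreover have "1 - (cmod c)\<^sup>2 \<ge> 0" "1 - (cmod z)\<^sup>2 \<ge> 0"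
    using c z by (simp_all add: power_le_one abs_square_le_1)
  ultimately have "1 - (cmod (\<phi> z))\<^sup>2 \<ge> (1 - (cmod c)\<^sup>2) * (1 - (cmod z)\<^sup>2) / 4"
  proof -
    assume eq: "1 - (cmod (\<phi> z))\<^sup>2 = (1 - (cmod c)\<^sup>2) * (1 - (cmod v)\<^sup>2) / (cmod (1 - cnj c * v))\<^sup>2"
      and D4: "(cmod (1 - cnj c * v))\<^sup>2 \<le> 4" and Dp: "(cmod (1 - cnj c * v))\<^sup>2 > 0"
      and BZ: "1 - (cmod v)\<^sup>2 \<ge> 1 - (cmod z)\<^sup>2" and A0: "1 - (cmod c)\<^sup>2 \<ge> 0" and Z0: "1 - (cmod z)\<^sup>2 \<ge> 0"
    have AB: "(1 - (cmod c)\<^sup>2) * (1 - (cmod z)\<^sup>2) \<le> (1 - (cmod c)\<^sup>2) * (1 - (cmod v)\<^sup>2)"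
      using BZ A0 by (rule mult_left_mono)
    have AZ0: "(1 - (cmod c)\<^sup>2) * (1 - (cmod z)\<^sup>2) \<ge> 0" using A0 Z0 by simp
    have "(1 - (cmod c)\<^sup>2) * (1 - (cmod z)\<^sup>2) / 4 \<le> (1 - (cmod c)\<^sup>2) * (1 - (cmod z)\<^sup>2) / (cmod (1 - cnj c * v))\<^sup>2"
      using D4 Dp AZ0 by (intro divide_left_mono) auto
    also have "\<dots> \<le> (1 - (cmod c)\<^sup>2) * (1 - (cmod v)\<^sup>2) / (cmod (1 - cnj c * v))\<^sup>2"
      using AB Dp by (intro divide_right_mono) auto
    finally show ?thesis using eq by simp
  qed
  thus ?thesis unfolding c_def by simp
qed

definition kb :: "real \<Rightarrow> real \<Rightarrow> real" where
  "kb \<beta> s = indicator {0<..<1} s * (1 - s) powr \<beta>"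

lemma kb_nonneg: "kb \<beta> s \<ge> 0"
  unfolding kb_def by (simp add: indicator_def)

lemma kb_meas [measurable]: "(\<lambda>s. kb \<beta> s) \<in> borel_measurable borel"
  unfolding kb_def by measurable

lemma beta_nn:
  assumes b: "\<beta> > -1"
  shows "(\<integral>\<^sup>+s. ennreal (kb \<beta> s * s ^ n) \<partial>lborel) = ennreal (A2_weight \<beta> n / (\<beta> + 1))"
proof -
  have "((\<lambda>t. t powr (real n + 1 - 1) * (1 - t) powr (\<beta> + 1 - 1)) has_integral Beta (real n + 1) (\<beta> + 1)) {0..1}"
    by (rule has_integral_Beta_real) (use b in auto)
  hence HI: "((\<lambda>t. t powr (real n) * (1 - t) powr \<beta>) has_integral Beta (real n + 1) (\<beta> + 1)) {0..1}"
    by simp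
  have "(\<integral>\<^sup>+x. ennreal (indicator {0..1} x * (x powr (real n) * (1 - x) powr \<beta>)) \<partial>lborel) = ennreal (Beta (real n + 1) (\<beta> + 1))"
    by (rule nn_integral_has_integral_lebesgue[OF _ HI]) auto
  moreover have "(\<integral>\<^sup>+s. ennreal (kb \<beta> s * s ^ n) \<partial>lborel) =
                 (\<integral>\<^sup>+x. ennreal (indicator {0..1} x * (x powr (real n) * (1 - x) powr \<beta>)) \<partial>lborel)"
  proof (rule nn_integral_cong_AE)
    have "AE x in lborel. x \<noteq> (0::real)" by (rule AE_lborel_singleton)
    moreover have "AE x in lborel. x \<noteq> (1::real)" by (rule AE_lborel_singleton)
    ultimately show "AE x in lborel. ennreal (kb \<beta> x * x ^ n) = ennreal (indicator {0..1} x * (x powr (real n) * (1 - x) powr \<beta>))"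
    proof eventually_elim
      case (elim x)
      show ?case
      proof (cases "0 < x \<and> x < 1")
        case True thus ?thesis by (simp add: kb_def powr_realpow mult_ac)
      next
        case False
        with elim have "x \<notin> {0..1}" by auto
        with False show ?thesis by (simp add: kb_def)
      qed
    qed
  qed
  moreover have "Beta (real n + 1) (\<beta> + 1) = A2_weight \<beta> n / (\<beta> + 1)"
    using w_Beta[OF b, of n] b by (simp add: field_simps)
  ultimately show ?thesis by simp
qed

lemma subst_nn:
  assumes b: "\<beta> > -1" and d: "0 < \<delta>" "\<delta> \<le> 1"
  shows "(\<integral>\<^sup>+s. ennreal (kb \<beta> s * (1 - \<delta> * (1 - s)) ^ n) \<partial>lborel)
          \<le> ennreal (\<delta> powr (- \<beta> - 1)) * (\<integral>\<^sup>+s. ennreal (kb \<beta> s * s ^ n) \<partial>lborel)"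
proof -
  define f where "f u = ennreal (kb \<beta> u * u ^ n)" for u
  have fm: "f \<in> borel_measurable borel" unfolding f_def by measurable
  have aff: "(\<integral>\<^sup>+u. f u \<partial>lborel) = ennreal \<delta> * (\<integral>\<^sup>+s. f ((1 - \<delta>) + \<delta> * s) \<partial>lborel)"
    using nn_integral_real_affine[OF fm, of \<delta> "1 - \<delta>"] d by simp
  have pw: "ennreal (\<delta> powr \<beta>) * ennreal (kb \<beta> s * (1 - \<delta> * (1 - s)) ^ n) \<le> f ((1 - \<delta>) + \<delta> * s)" for s
  proof (cases "0 < s \<and> s < 1")
    case True
    have e: "(1 - \<delta>) + \<delta> * s = 1 - \<delta> * (1 - s)" by (simp add: algebra_simps)
    have in01: "0 < 1 - \<delta> * (1 - s)" "1 - \<delta> * (1 - s) < 1"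
    proof -
      have "\<delta> * (1 - s) \<le> 1 * (1 - s)" using d True by (intro mult_right_mono) auto
      hence "\<delta> * (1 - s) \<le> 1 - s" by simp
      moreover have "1 - s < 1" using True by simp
      ultimately have "\<delta> * (1 - s) < 1" by (rule le_less_trans)
      thus "0 < 1 - \<delta> * (1 - s)" by simp
      show "1 - \<delta> * (1 - s) < 1" using d True by simp
    qed
    have "1 - (1 - \<delta> * (1 - s)) = \<delta> * (1 - s)" by simp
    hence pp: "(1 - (1 - \<delta> * (1 - s))) powr \<beta> = \<delta> powr \<beta> * (1 - s) powr \<beta>"
      using d True by (simp add: powr_mult)
    have "ennreal (\<delta> powr \<beta>) * ennreal (kb \<beta> s * (1 - \<delta> * (1 - s)) ^ n) =
          ennreal (\<delta> powr \<beta> * (kb \<beta> s * (1 - \<delta> * (1 - s)) ^ n))"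
      by (rule ennreal_mult[symmetric]) (use in01 kb_nonneg[of \<beta> s] in auto)
    also have "\<dots> = f ((1 - \<delta>) + \<delta> * s)"
      unfolding f_def e using True in01 pp by (simp add: kb_def mult_ac)
    finally show ?thesis by simp
  next
    case False
    thus ?thesis by (simp add: kb_def f_def)
  qed
  have "ennreal (\<delta> powr \<beta>) * (\<integral>\<^sup>+s. ennreal (kb \<beta> s * (1 - \<delta> * (1 - s)) ^ n) \<partial>lborel)
        = (\<integral>\<^sup>+s. ennreal (\<delta> powr \<beta>) * ennreal (kb \<beta> s * (1 - \<delta> * (1 - s)) ^ n) \<partial>lborel)"
    by (rule nn_integral_cmult[symmetric]) measurable
  also have "\<dots> \<le> (\<integral>\<^sup>+s. f ((1 - \<delta>) + \<delta> * s) \<partial>lborel)"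
    by (rule nn_integral_mono) (rule pw)
  finally have "ennreal \<delta> * (ennreal (\<delta> powr \<beta>) * (\<integral>\<^sup>+s. ennreal (kb \<beta> s * (1 - \<delta> * (1 - s)) ^ n) \<partial>lborel))
                \<le> (\<integral>\<^sup>+u. f u \<partial>lborel)"
    unfolding aff by (rule mult_left_mono) simp
  hence "ennreal (\<delta> powr (\<beta> + 1)) * (\<integral>\<^sup>+s. ennreal (kb \<beta> s * (1 - \<delta> * (1 - s)) ^ n) \<partial>lborel)
                \<le> (\<integral>\<^sup>+u. f u \<partial>lborel)"
    using d by (simp add: powr_add ennreal_mult mult.assoc mult.commute)
  hence "ennreal (\<delta> powr (- \<beta> - 1)) * (ennreal (\<delta> powr (\<beta> + 1)) * (\<integral>\<^sup>+s. ennreal (kb \<beta> s * (1 - \<delta> * (1 - s)) ^ n) \<partial>lborel))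
                \<le> ennreal (\<delta> powr (- \<beta> - 1)) * (\<integral>\<^sup>+u. f u \<partial>lborel)"
    by (rule mult_left_mono) simp
  moreover have "ennreal (\<delta> powr (- \<beta> - 1)) * ennreal (\<delta> powr (\<beta> + 1)) = 1"
    using d by (simp flip: ennreal_mult add: powr_add[symmetric])
  ultimately show ?thesis unfolding f_def by (simp add: mult.assoc[symmetric])
qed

lemma weight_transfer:
  assumes b: "\<beta> > -1" and x: "\<And>m. x m \<ge> 0" and y: "\<And>n. y n \<ge> 0"
    and sy: "summable (\<lambda>n. A2_weight \<beta> n * y n)"
    and d: "0 < \<delta>" "\<delta> \<le> 1" and K: "K \<ge> 0"
    and sumy: "\<And>s. 0 < s \<Longrightarrow> s < 1 \<Longrightarrow> summable (\<lambda>n. y n * (1 - \<delta> * (1 - s)) ^ n)"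
    and H: "\<And>s M. 0 < s \<Longrightarrow> s < 1 \<Longrightarrow> (\<Sum>m<M. x m * s ^ m) \<le> K * (\<Sum>n. y n * (1 - \<delta> * (1 - s)) ^ n)"
  shows "summable (\<lambda>m. A2_weight \<beta> m * x m)"
proof -
  define \<rho> where "\<rho> s = 1 - \<delta> * (1 - s)" for s
  define p where "p = \<delta> powr (- \<beta> - 1)"
  have p: "p \<ge> 0" unfolding p_def by simp
  have b1: "\<beta> + 1 > 0" using b by simp
  have wpos: "A2_weight \<beta> n > 0" for n using w_pos[OF b] .
  define C where "C = ennreal (\<beta> + 1) * ennreal (K * p / (\<beta> + 1) * (\<Sum>n. A2_weight \<beta> n * y n))"
  have stepA: "ennreal (A2_weight \<beta> m * x m) = ennreal (\<beta> + 1) * (\<integral>\<^sup>+s. ennreal (x m * (kb \<beta> s * s ^ m)) \<partial>lborel)" for m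
  proof -
    have "(\<integral>\<^sup>+s. ennreal (x m * (kb \<beta> s * s ^ m)) \<partial>lborel) = (\<integral>\<^sup>+s. ennreal (x m) * ennreal (kb \<beta> s * s ^ m) \<partial>lborel)"
      using x by (intro nn_integral_cong) (simp add: ennreal_mult')
    also have "\<dots> = ennreal (x m) * (\<integral>\<^sup>+s. ennreal (kb \<beta> s * s ^ m) \<partial>lborel)"
      by (rule nn_integral_cmult) measurable
    also have "\<dots> = ennreal (x m) * ennreal (A2_weight \<beta> m / (\<beta> + 1))" by (simp add: beta_nn[OF b])
    finally have I: "(\<integral>\<^sup>+s. ennreal (x m * (kb \<beta> s * s ^ m)) \<partial>lborel) = ennreal (x m) * ennreal (A2_weight \<beta> m / (\<beta> + 1))" .
    have e1: "ennreal (x m * (A2_weight \<beta> m / (\<beta> + 1))) = ennreal (x m) * ennreal (A2_weight \<beta> m / (\<beta> + 1))"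
      by (rule ennreal_mult') (rule x)
    have e2: "ennreal ((\<beta> + 1) * (x m * (A2_weight \<beta> m / (\<beta> + 1)))) = ennreal (\<beta> + 1) * ennreal (x m * (A2_weight \<beta> m / (\<beta> + 1)))"
      by (rule ennreal_mult') (use b1 in simp)
    have eq2: "ennreal ((\<beta> + 1) * (x m * (A2_weight \<beta> m / (\<beta> + 1)))) = ennreal (\<beta> + 1) * (ennreal (x m) * ennreal (A2_weight \<beta> m / (\<beta> + 1)))"
      unfolding e2 e1 ..
    have "ennreal (\<beta> + 1) * (\<integral>\<^sup>+s. ennreal (x m * (kb \<beta> s * s ^ m)) \<partial>lborel)
         = ennreal ((\<beta> + 1) * (x m * (A2_weight \<beta> m / (\<beta> + 1))))"
      unfolding I eq2 ..
    also have "(\<beta> + 1) * (x m * (A2_weight \<beta> m / (\<beta> + 1))) = A2_weight \<beta> m * x m" using b1 by simp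
    finally show ?thesis by simp
  qed
  have pointwise: "(\<Sum>m<N. ennreal (x m * (kb \<beta> s * s ^ m))) \<le> (\<Sum>n. ennreal (K * y n * (kb \<beta> s * \<rho> s ^ n)))" for N s
  proof (cases "0 < s \<and> s < 1")
    case True
    have kb: "kb \<beta> s \<ge> 0" by (rule kb_nonneg)
    have rho: "\<rho> s > 0"
    proof -
      have "\<delta> * (1 - s) \<le> 1 * (1 - s)" using d True by (intro mult_right_mono) auto
      hence "\<delta> * (1 - s) \<le> 1 - s" by simp
      moreover have "1 - s < 1" using True by simp
      ultimately have "\<delta> * (1 - s) < 1" by (rule le_less_trans)
      thus ?thesis unfolding \<rho>_def by simp
    qed
    have "(\<Sum>m<N. ennreal (x m * (kb \<beta> s * s ^ m))) = ennreal (kb \<beta> s * (\<Sum>m<N. x m * s ^ m))"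
      using x kb True by (subst sum_ennreal) (auto simp: sum_distrib_left mult_ac)
    also have "\<dots> \<le> ennreal (kb \<beta> s * (K * (\<Sum>n. y n * \<rho> s ^ n)))"
      using H[of s N] True kb unfolding \<rho>_def by (intro ennreal_leI mult_left_mono) auto
    also have "kb \<beta> s * (K * (\<Sum>n. y n * \<rho> s ^ n)) = (\<Sum>n. K * y n * (kb \<beta> s * \<rho> s ^ n))"
    proof -
      have "summable (\<lambda>n. y n * \<rho> s ^ n)" using sumy True unfolding \<rho>_def by auto
      hence "(\<Sum>n. (kb \<beta> s * K) * (y n * \<rho> s ^ n)) = (kb \<beta> s * K) * (\<Sum>n. y n * \<rho> s ^ n)"
        by (rule suminf_mult)
      thus ?thesis by (simp add: mult_ac)
    qed
    also have "ennreal (\<Sum>n. K * y n * (kb \<beta> s * \<rho> s ^ n)) = (\<Sum>n. ennreal (K * y n * (kb \<beta> s * \<rho> s ^ n)))"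
    proof (rule suminf_ennreal2[symmetric])
      show "0 \<le> K * y n * (kb \<beta> s * \<rho> s ^ n)" for n using K y kb rho by simp
      have "summable (\<lambda>n. y n * \<rho> s ^ n)" using sumy True unfolding \<rho>_def by auto
      from summable_mult[OF this, of "K * kb \<beta> s"]
      show "summable (\<lambda>n. K * y n * (kb \<beta> s * \<rho> s ^ n))" by (simp add: mult_ac)
    qed
    finally show ?thesis .
  next
    case False
    hence "kb \<beta> s = 0" by (auto simp: kb_def)
    thus ?thesis by simp
  qed
  have partial: "(\<Sum>m<N. ennreal (A2_weight \<beta> m * x m)) \<le> C" for N
  proof -
    have "(\<Sum>m<N. ennreal (A2_weight \<beta> m * x m)) = ennreal (\<beta> + 1) * (\<Sum>m<N. \<integral>\<^sup>+s. ennreal (x m * (kb \<beta> s * s ^ m)) \<partial>lborel)"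
      by (simp add: stepA sum_distrib_left)
    also have "(\<Sum>m<N. \<integral>\<^sup>+s. ennreal (x m * (kb \<beta> s * s ^ m)) \<partial>lborel) = (\<integral>\<^sup>+s. (\<Sum>m<N. ennreal (x m * (kb \<beta> s * s ^ m))) \<partial>lborel)"
      by (rule nn_integral_sum[symmetric]) measurable
    also have "\<dots> \<le> (\<integral>\<^sup>+s. (\<Sum>n. ennreal (K * y n * (kb \<beta> s * \<rho> s ^ n))) \<partial>lborel)"
      by (rule nn_integral_mono) (rule pointwise)
    also have "\<dots> = (\<Sum>n. \<integral>\<^sup>+s. ennreal (K * y n * (kb \<beta> s * \<rho> s ^ n)) \<partial>lborel)"
      by (rule nn_integral_suminf) (unfold \<rho>_def, measurable)
    also have "\<dots> \<le> (\<Sum>n. ennreal (K * p / (\<beta> + 1) * (A2_weight \<beta> n * y n)))"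
    proof (rule suminf_le)
      fix n
      have "(\<integral>\<^sup>+s. ennreal (K * y n * (kb \<beta> s * \<rho> s ^ n)) \<partial>lborel) = (\<integral>\<^sup>+s. ennreal (K * y n) * ennreal (kb \<beta> s * \<rho> s ^ n) \<partial>lborel)"
        using K y by (intro nn_integral_cong) (simp add: ennreal_mult')
      also have "\<dots> = ennreal (K * y n) * (\<integral>\<^sup>+s. ennreal (kb \<beta> s * \<rho> s ^ n) \<partial>lborel)"
        by (rule nn_integral_cmult) (unfold \<rho>_def, measurable)
      also have "\<dots> \<le> ennreal (K * y n) * (ennreal p * (\<integral>\<^sup>+s. ennreal (kb \<beta> s * s ^ n) \<partial>lborel))"
        unfolding \<rho>_def p_def by (intro mult_left_mono subst_nn[OF b d]) simp
      also have "\<dots> = ennreal (K * y n) * (ennreal p * ennreal (A2_weight \<beta> n / (\<beta> + 1)))"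
        by (simp add: beta_nn[OF b])
      also have "\<dots> = ennreal (K * p / (\<beta> + 1) * (A2_weight \<beta> n * y n))"
        using K y[of n] p b1 wpos[of n] by (simp add: ennreal_mult[symmetric] mult_ac)
      finally show "(\<integral>\<^sup>+s. ennreal (K * y n * (kb \<beta> s * \<rho> s ^ n)) \<partial>lborel) \<le> ennreal (K * p / (\<beta> + 1) * (A2_weight \<beta> n * y n))" .
    qed auto
    also have "\<dots> = ennreal (K * p / (\<beta> + 1) * (\<Sum>n. A2_weight \<beta> n * y n))"
    proof -
      have "summable (\<lambda>n. K * p / (\<beta> + 1) * (A2_weight \<beta> n * y n))" by (intro summable_mult sy)
      moreover have "\<And>n. 0 \<le> K * p / (\<beta> + 1) * (A2_weight \<beta> n * y n)"
        using K p b1 y wpos by (simp add: less_imp_le)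
      ultimately have "(\<Sum>n. ennreal (K * p / (\<beta> + 1) * (A2_weight \<beta> n * y n))) = ennreal (\<Sum>n. K * p / (\<beta> + 1) * (A2_weight \<beta> n * y n))"
        by (intro suminf_ennreal2)
      also have "(\<Sum>n. K * p / (\<beta> + 1) * (A2_weight \<beta> n * y n)) = K * p / (\<beta> + 1) * (\<Sum>n. A2_weight \<beta> n * y n)"
        by (rule suminf_mult[OF sy])
      finally show ?thesis .
    qed
    finally show ?thesis unfolding C_def by (simp add: mult_left_mono)
  qed
  have "(\<Sum>m. ennreal (A2_weight \<beta> m * x m)) \<le> C"
    using ennreal_suminf_bound_add[of "\<lambda>m. ennreal (A2_weight \<beta> m * x m)" 0 C] partial by simp
  moreover have "C < top" unfolding C_def by (simp add: ennreal_mult_less_top)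
  ultimately have "(\<Sum>m. ennreal (A2_weight \<beta> m * x m)) \<noteq> top" by (metis neq_top_trans top.not_eq_extremum order_le_less_trans)
  moreover have "\<And>m. 0 \<le> A2_weight \<beta> m * x m" using x wpos by (simp add: less_imp_le)
  ultimately show ?thesis by (intro summable_suminf_not_top)
qed

lemma comp_op_A2:
  assumes b: "\<beta> > -1" and a: "a \<in> A2 \<beta>"
    and hol\<phi>: "\<phi> holomorphic_on ball 0 1" and maps: "\<phi> ` ball 0 1 \<subseteq> ball 0 1"
  shows "comp_op \<phi> a \<in> A2 \<beta>"
proof -
  define c where "c = \<phi> 0"
  define \<kappa> where "\<kappa> = (1 - (cmod c)\<^sup>2) / 4"
  define \<delta> where "\<delta> = \<kappa> / 2"
  define K where "K = 2 / \<kappa>"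
  have c1: "cmod c < 1" using maps unfolding c_def image_subset_iff by (metis centre_in_ball mem_ball_0 zero_less_one)
  have csq: "(cmod c)\<^sup>2 < 1" using c1 by (simp add: power_less_one_iff abs_square_less_1)
  have \<kappa>pos: "\<kappa> > 0" unfolding \<kappa>_def using csq by simp
  have \<kappa>le: "\<kappa> \<le> 1/4" unfolding \<kappa>_def by simp
  have d: "0 < \<delta>" "\<delta> \<le> 1" using \<kappa>pos \<kappa>le unfolding \<delta>_def by auto
  have K: "K \<ge> 0" using \<kappa>pos unfolding K_def by simp
  have sy: "summable (\<lambda>n. A2_weight \<beta> n * (cmod (a n))\<^sup>2)" using a unfolding A2_def by simp
  have rho: "0 < 1 - \<delta> * (1 - s)" "1 - \<delta> * (1 - s) < 1" if "0 < s" "s < 1" for s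
  proof -
    have "\<delta> * (1 - s) \<le> 1 * (1 - s)" using d that by (intro mult_right_mono) auto
    hence "\<delta> * (1 - s) \<le> 1 - s" by simp
    moreover have "1 - s < 1" using that by simp
    ultimately have "\<delta> * (1 - s) < 1" by (rule le_less_trans)
    thus "0 < 1 - \<delta> * (1 - s)" by simp
    show "1 - \<delta> * (1 - s) < 1" using d that by simp
  qed
  have Rpow: "sqrt (1 - \<delta> * (1 - s)) ^ (2 * n) = (1 - \<delta> * (1 - s)) ^ n" if "0 < s" "s < 1" for s n
    using rho[OF that] by (simp add: power_mult)
  have sumy: "summable (\<lambda>n. (cmod (a n))\<^sup>2 * (1 - \<delta> * (1 - s)) ^ n)" if "0 < s" "s < 1" for s
  proof -
    have "(\<lambda>n. (cmod (a n))\<^sup>2 * sqrt (1 - \<delta> * (1 - s)) ^ (2 * n)) sums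
          integral {0..1} (\<lambda>t. (cmod (as_fun a (of_real (sqrt (1 - \<delta> * (1 - s))) * E t)))\<^sup>2)"
      by (rule parseval_as_fun[OF b a]) (use rho[OF that] in auto)
    hence "summable (\<lambda>n. (cmod (a n))\<^sup>2 * sqrt (1 - \<delta> * (1 - s)) ^ (2 * n))" by (rule sums_summable)
    thus ?thesis using Rpow[OF that] by simp
  qed
  have H: "(\<Sum>m<M. (cmod (comp_op \<phi> a m))\<^sup>2 * s ^ m) \<le> K * (\<Sum>n. (cmod (a n))\<^sup>2 * (1 - \<delta> * (1 - s)) ^ n)"
    if s: "0 < s" "s < 1" for s M
  proof -
    define r where "r = sqrt s"
    define R where "R = sqrt (1 - \<delta> * (1 - s))"
    have r: "0 < r" "r < 1" unfolding r_def using s by auto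
    have R: "0 < R" "R < 1" unfolding R_def using rho[OF s] by auto
    have R2: "R\<^sup>2 = 1 - \<delta> * (1 - s)" unfolding R_def using rho[OF s] by simp
    have bnd: "norm (\<phi> z) < R" if z: "norm z \<le> r" for z
    proof -
      have zl: "norm z < 1" using z r by simp
      have sp: "1 - (cmod (\<phi> z))\<^sup>2 \<ge> \<kappa> * (1 - (cmod z)\<^sup>2)"
        using schwarz_pick_bound[OF hol\<phi> maps zl] unfolding \<kappa>_def c_def by simp
      have "(cmod z)\<^sup>2 \<le> r\<^sup>2" using z by (intro power_mono) auto
      hence "(cmod z)\<^sup>2 \<le> s" unfolding r_def using s by simp
      hence "\<kappa> * (1 - s) \<le> \<kappa> * (1 - (cmod z)\<^sup>2)" using \<kappa>pos by (intro mult_left_mono) auto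
      moreover have "\<delta> * (1 - s) < \<kappa> * (1 - s)" unfolding \<delta>_def using \<kappa>pos s by simp
      ultimately have "(cmod (\<phi> z))\<^sup>2 < R\<^sup>2" using sp R2 by linarith
      thus ?thesis using R by (simp add: power_less_imp_less_base)
    qed
    have cl: "(\<Sum>m<M. (cmod (taylor_coeffs (\<lambda>z. as_fun a (\<phi> z)) m))\<^sup>2 * r ^ (2 * m))
          \<le> (R + cmod (\<phi> 0)) / (R - cmod (\<phi> 0)) * (\<Sum>n. (cmod (a n))\<^sup>2 * R ^ (2 * n))"
      by (rule circle_littlewood[OF b a hol\<phi> maps r R bnd])
    have lhs: "(\<Sum>m<M. (cmod (taylor_coeffs (\<lambda>z. as_fun a (\<phi> z)) m))\<^sup>2 * r ^ (2 * m)) =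
               (\<Sum>m<M. (cmod (comp_op \<phi> a m))\<^sup>2 * s ^ m)"
      unfolding comp_op_def r_def using s by (simp add: power_mult)
    have rhs: "(\<Sum>n. (cmod (a n))\<^sup>2 * R ^ (2 * n)) = (\<Sum>n. (cmod (a n))\<^sup>2 * (1 - \<delta> * (1 - s)) ^ n)"
      unfolding R_def using Rpow[OF s] by simp
    have Snn: "(\<Sum>n. (cmod (a n))\<^sup>2 * (1 - \<delta> * (1 - s)) ^ n) \<ge> 0"
      using rho[OF s] by (intro suminf_nonneg sumy[OF s]) simp
    have ratio: "(R + cmod c) / (R - cmod c) \<le> K"
    proof -
      have "R\<^sup>2 \<ge> 1 - \<delta>" unfolding R2 using d s by (simp add: algebra_simps mult_left_le)
      moreover have "(cmod c)\<^sup>2 = 1 - 4 * \<kappa>" unfolding \<kappa>_def by (simp add: field_simps)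
      ultimately have "R\<^sup>2 - (cmod c)\<^sup>2 \<ge> 2 * \<kappa>" unfolding \<delta>_def using \<kappa>pos by simp
      hence "(R - cmod c) * (R + cmod c) \<ge> 2 * \<kappa>" by (simp add: power2_eq_square algebra_simps)
      moreover have "R + cmod c \<le> 2" using R c1 by simp
      moreover have "R + cmod c > 0" using R norm_ge_zero[of c] by linarith
      ultimately have "(R - cmod c) * 2 \<ge> 2 * \<kappa>"
      proof -
        assume P: "(R - cmod c) * (R + cmod c) \<ge> 2 * \<kappa>" and S2: "R + cmod c \<le> 2" and Sp: "R + cmod c > 0"
        have "R - cmod c > 0"
        proof (rule ccontr)
          assume "\<not> R - cmod c > 0"
          hence "(R - cmod c) * (R + cmod c) \<le> 0" using Sp by (simp add: mult_nonpos_nonneg)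
          thus False using P \<kappa>pos by simp
        qed
        hence "(R - cmod c) * (R + cmod c) \<le> (R - cmod c) * 2" using S2 by (intro mult_left_mono) auto
        thus ?thesis using P by simp
      qed
      hence Rc: "R - cmod c \<ge> \<kappa>" by simp
      have "(R + cmod c) / (R - cmod c) \<le> 2 / (R - cmod c)"
        using Rc \<kappa>pos \<open>R + cmod c \<le> 2\<close> by (intro divide_right_mono) auto
      also have "\<dots> \<le> 2 / \<kappa>" using Rc \<kappa>pos by (intro divide_left_mono) auto
      finally show ?thesis unfolding K_def .
    qed
    show ?thesis
      using cl lhs rhs mult_right_mono[OF ratio Snn] unfolding c_def by simp
  qed
  have "summable (\<lambda>m. A2_weight \<beta> m * (cmod (comp_op \<phi> a m))\<^sup>2)"
    by (rule weight_transfer[OF b _ _ sy d K sumy H]) auto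
  thus ?thesis unfolding A2_def by simp
qed

lemma deriv_funpow_const: "(deriv ^^ n) (\<lambda>z. c) = (if n = 0 then (\<lambda>z. c) else (\<lambda>z::complex. 0))"
  by (induction n) auto

lemma comp_op_const:
  "comp_op \<phi> (\<lambda>n. if n = 0 then c else 0) = (\<lambda>n. if n = 0 then c else 0)"
proof -
  have af: "as_fun (\<lambda>n. if n = 0 then c else 0) z = c" for z
  proof -
    have "(\<lambda>n. (if n = 0 then c else 0) * z ^ n) = (\<lambda>n. if n = 0 then (\<lambda>_. c) n else 0)"
      by (auto simp: fun_eq_iff)
    hence "(\<lambda>n. (if n = 0 then c else 0) * z ^ n) sums c" using sums_single[of 0 "\<lambda>_. c"] by simp
    thus ?thesis unfolding as_fun_def by (simp add: sums_iff)
  qed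
  show ?thesis unfolding comp_op_def taylor_coeffs_def af
    by (auto simp: fun_eq_iff deriv_funpow_const)
qed

lemma const_A2: "(\<lambda>n. if n = 0 then c else 0) \<in> A2 \<beta>"
proof -
  have "summable (\<lambda>n. if n = 0 then A2_weight \<beta> n * (cmod c)\<^sup>2 else 0)"
    using summable_single[of 0 "\<lambda>n. A2_weight \<beta> n * (cmod c)\<^sup>2"] by simp
  moreover have "(\<lambda>n. A2_weight \<beta> n * (cmod (if n = 0 then c else 0))\<^sup>2) = (\<lambda>n. if n = 0 then A2_weight \<beta> n * (cmod c)\<^sup>2 else 0)"
    by (auto simp: fun_eq_iff)
  ultimately show ?thesis unfolding A2_def by simp
qed

context
  fixes \<beta> :: real
  assumes b: "\<beta> > -1"
begin

abbreviation w where "w \<equiv> A2_weight \<beta>"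

lemma wp: "w n > 0" using w_pos[OF b] .

lemma A2_add: "u \<in> A2 \<beta> \<Longrightarrow> v \<in> A2 \<beta> \<Longrightarrow> (\<lambda>n. u n + v n) \<in> A2 \<beta>"
proof -
  assume u: "u \<in> A2 \<beta>" and v: "v \<in> A2 \<beta>"
  have "summable (\<lambda>n. 2 * (w n * (cmod (u n))\<^sup>2) + 2 * (w n * (cmod (v n))\<^sup>2))"
    using u v unfolding A2_def by (intro summable_add summable_mult) auto
  moreover have "norm (w n * (cmod (u n + v n))\<^sup>2) \<le> 2 * (w n * (cmod (u n))\<^sup>2) + 2 * (w n * (cmod (v n))\<^sup>2)" for n
  proof -
    have "(cmod (u n + v n))\<^sup>2 \<le> (cmod (u n) + cmod (v n))\<^sup>2" by (intro power_mono norm_triangle_ineq) auto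
    also have "\<dots> \<le> 2 * (cmod (u n))\<^sup>2 + 2 * (cmod (v n))\<^sup>2"
    proof -
      have "(cmod (u n) + cmod (v n))\<^sup>2 = (cmod (u n))\<^sup>2 + (cmod (v n))\<^sup>2 + 2 * cmod (u n) * cmod (v n)"
        by (simp add: power2_sum)
      moreover have "2 * cmod (u n) * cmod (v n) \<le> (cmod (u n))\<^sup>2 + (cmod (v n))\<^sup>2"
        by (rule sum_squares_bound)
      ultimately show ?thesis by linarith
    qed
    finally have "w n * (cmod (u n + v n))\<^sup>2 \<le> w n * (2 * (cmod (u n))\<^sup>2 + 2 * (cmod (v n))\<^sup>2)"
      using wp[of n] by (intro mult_left_mono) auto
    thus ?thesis using wp[of n] by (simp add: algebra_simps)
  qed
  ultimately show ?thesis unfolding A2_def by (auto intro: summable_comparison_test')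
qed

lemma A2_scale: "u \<in> A2 \<beta> \<Longrightarrow> (\<lambda>n. c * u n) \<in> A2 \<beta>"
proof -
  assume u: "u \<in> A2 \<beta>"
  have "summable (\<lambda>n. (cmod c)\<^sup>2 * (w n * (cmod (u n))\<^sup>2))"
    using u unfolding A2_def by (intro summable_mult) auto
  thus ?thesis unfolding A2_def by (simp add: norm_mult power_mult_distrib mult_ac)
qed

lemma A2_diff: "u \<in> A2 \<beta> \<Longrightarrow> v \<in> A2 \<beta> \<Longrightarrow> (\<lambda>n. u n - v n) \<in> A2 \<beta>"
  using A2_add[of u "\<lambda>n. (-1) * v n"] A2_scale[of v "-1"] by simp

lemma inner_summable_norm:
  assumes u: "u \<in> A2 \<beta>" and v: "v \<in> A2 \<beta>"
  shows "summable (\<lambda>n. norm (complex_of_real (w n) * u n * cnj (v n)))"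
proof (rule summable_comparison_test')
  show "summable (\<lambda>n. (w n * (cmod (u n))\<^sup>2 + w n * (cmod (v n))\<^sup>2) / 2)"
    using u v unfolding A2_def by (intro summable_divide summable_add) auto
  fix n
  have "2 * (cmod (u n) * cmod (v n)) \<le> (cmod (u n))\<^sup>2 + (cmod (v n))\<^sup>2"
    using sum_squares_bound[of "cmod (u n)" "cmod (v n)"] by (simp only: mult.assoc)
  hence "w n * (2 * (cmod (u n) * cmod (v n))) \<le> w n * ((cmod (u n))\<^sup>2 + (cmod (v n))\<^sup>2)"
    using wp[of n] by (intro mult_left_mono) auto
  thus "norm (norm (complex_of_real (w n) * u n * cnj (v n))) \<le> (w n * (cmod (u n))\<^sup>2 + w n * (cmod (v n))\<^sup>2) / 2"
    using wp[of n] by (simp add: norm_mult algebra_simps)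
qed

lemma inner_summable:
  "u \<in> A2 \<beta> \<Longrightarrow> v \<in> A2 \<beta> \<Longrightarrow> summable (\<lambda>n. complex_of_real (w n) * u n * cnj (v n))"
  by (rule summable_norm_cancel) (rule inner_summable_norm)

lemma inner_bound:
  assumes u: "u \<in> A2 \<beta>" and v: "v \<in> A2 \<beta>"
  shows "2 * cmod (A2_inner \<beta> u v) \<le> (\<Sum>n. w n * (cmod (u n))\<^sup>2) + (\<Sum>n. w n * (cmod (v n))\<^sup>2)"
proof -
  have su: "summable (\<lambda>n. w n * (cmod (u n))\<^sup>2)" and sv: "summable (\<lambda>n. w n * (cmod (v n))\<^sup>2)"
    using u v unfolding A2_def by auto
  have "cmod (A2_inner \<beta> u v) \<le> (\<Sum>n. norm (complex_of_real (w n) * u n * cnj (v n)))"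
    unfolding A2_inner_def by (rule summable_norm[OF inner_summable_norm[OF u v]])
  also have "\<dots> \<le> (\<Sum>n. (w n * (cmod (u n))\<^sup>2 + w n * (cmod (v n))\<^sup>2) / 2)"
  proof (rule suminf_le)
    fix n
    have "2 * (cmod (u n) * cmod (v n)) \<le> (cmod (u n))\<^sup>2 + (cmod (v n))\<^sup>2"
      using sum_squares_bound[of "cmod (u n)" "cmod (v n)"] by (simp only: mult.assoc)
    hence "w n * (2 * (cmod (u n) * cmod (v n))) \<le> w n * ((cmod (u n))\<^sup>2 + (cmod (v n))\<^sup>2)"
      using wp[of n] by (intro mult_left_mono) auto
    thus "norm (complex_of_real (w n) * u n * cnj (v n)) \<le> (w n * (cmod (u n))\<^sup>2 + w n * (cmod (v n))\<^sup>2) / 2"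
      using wp[of n] by (simp add: norm_mult algebra_simps)
    show "summable (\<lambda>n. norm (complex_of_real (w n) * u n * cnj (v n)))" by (rule inner_summable_norm[OF u v])
    show "summable (\<lambda>n. (w n * (cmod (u n))\<^sup>2 + w n * (cmod (v n))\<^sup>2) / 2)"
      using su sv by (intro summable_divide summable_add)
  qed
  also have "\<dots> = (\<Sum>n. w n * (cmod (u n))\<^sup>2 + w n * (cmod (v n))\<^sup>2) / 2"
    by (rule suminf_divide) (intro summable_add su sv)
  also have "(\<Sum>n. w n * (cmod (u n))\<^sup>2 + w n * (cmod (v n))\<^sup>2) = (\<Sum>n. w n * (cmod (u n))\<^sup>2) + (\<Sum>n. w n * (cmod (v n))\<^sup>2)"
    by (rule suminf_add[symmetric, OF su sv])
  finally show ?thesis by simp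
qed

lemma inner_self: "u \<in> A2 \<beta> \<Longrightarrow> A2_inner \<beta> u u = of_real (\<Sum>n. w n * (cmod (u n))\<^sup>2)"
proof -
  assume u: "u \<in> A2 \<beta>"
  have su: "summable (\<lambda>n. w n * (cmod (u n))\<^sup>2)" using u unfolding A2_def by auto
  have "(\<lambda>n. complex_of_real (w n) * u n * cnj (u n)) = (\<lambda>n. of_real (w n * (cmod (u n))\<^sup>2))"
    by (rule ext) (simp only: mult.assoc complex_norm_square[symmetric] of_real_mult)
  thus ?thesis unfolding A2_inner_def by (simp only: suminf_of_real[OF su])
qed

lemma inner_diff_right:
  assumes "x \<in> A2 \<beta>" "u \<in> A2 \<beta>" "v \<in> A2 \<beta>"
  shows "A2_inner \<beta> x (\<lambda>n. u n - v n) = A2_inner \<beta> x u - A2_inner \<beta> x v"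
proof -
  have e: "(\<lambda>n. complex_of_real (w n) * x n * cnj (u n - v n)) =
           (\<lambda>n. complex_of_real (w n) * x n * cnj (u n) - complex_of_real (w n) * x n * cnj (v n))"
    by (simp add: fun_eq_iff algebra_simps)
  show ?thesis unfolding A2_inner_def e
    by (rule suminf_diff[symmetric]) (use assms in \<open>auto intro!: inner_summable\<close>)
qed

lemma inner_add_right:
  assumes "x \<in> A2 \<beta>" "u \<in> A2 \<beta>" "v \<in> A2 \<beta>"
  shows "A2_inner \<beta> x (\<lambda>n. u n + v n) = A2_inner \<beta> x u + A2_inner \<beta> x v"
proof -
  have e: "(\<lambda>n. complex_of_real (w n) * x n * cnj (u n + v n)) =
           (\<lambda>n. complex_of_real (w n) * x n * cnj (u n) + complex_of_real (w n) * x n * cnj (v n))"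
    by (simp add: fun_eq_iff algebra_simps)
  show ?thesis unfolding A2_inner_def e
    by (rule suminf_add[symmetric]) (use assms in \<open>auto intro!: inner_summable\<close>)
qed

lemma inner_diff_left:
  assumes "u \<in> A2 \<beta>" "v \<in> A2 \<beta>" "x \<in> A2 \<beta>"
  shows "A2_inner \<beta> (\<lambda>n. u n - v n) x = A2_inner \<beta> u x - A2_inner \<beta> v x"
proof -
  have e: "(\<lambda>n. complex_of_real (w n) * (u n - v n) * cnj (x n)) =
           (\<lambda>n. complex_of_real (w n) * u n * cnj (x n) - complex_of_real (w n) * v n * cnj (x n))"
    by (simp add: fun_eq_iff algebra_simps)
  show ?thesis unfolding A2_inner_def e
    by (rule suminf_diff[symmetric]) (use assms in \<open>auto intro!: inner_summable\<close>)
qed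

lemma inner_scale_left:
  assumes "u \<in> A2 \<beta>" "x \<in> A2 \<beta>"
  shows "A2_inner \<beta> (\<lambda>n. c * u n) x = c * A2_inner \<beta> u x"
proof -
  have e: "(\<lambda>n. complex_of_real (w n) * (c * u n) * cnj (x n)) =
           (\<lambda>n. c * (complex_of_real (w n) * u n * cnj (x n)))"
    by (simp add: fun_eq_iff mult_ac)
  show ?thesis unfolding A2_inner_def e
    by (rule suminf_mult) (use assms in \<open>auto intro!: inner_summable\<close>)
qed

lemma A2_zero:
  assumes u: "u \<in> A2 \<beta>" and z: "(\<Sum>n. w n * (cmod (u n))\<^sup>2) = 0"
  shows "u = (\<lambda>n. 0)"
proof -
  have su: "summable (\<lambda>n. w n * (cmod (u n))\<^sup>2)" using u unfolding A2_def by auto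
  have "\<forall>n. w n * (cmod (u n))\<^sup>2 = 0"
    using suminf_eq_zero_iff[OF su] z wp by (simp add: less_imp_le)
  show ?thesis
  proof (rule ext)
    fix n
    have "w n * (cmod (u n))\<^sup>2 = 0" using \<open>\<forall>n. w n * (cmod (u n))\<^sup>2 = 0\<close> by blast
    hence "(cmod (u n))\<^sup>2 = 0" using wp[of n] by simp
    thus "u n = 0" by simp
  qed
qed

end

theorem proposition3p2:
  fixes \<beta> :: real and \<phi> :: "complex \<Rightarrow> complex"
  assumes "\<beta> > -1"
    and "\<phi> holomorphic_on ball 0 1" and "\<phi> ` ball 0 1 \<subseteq> ball 0 1"
    and "A2_complex_symmetric \<beta> (comp_op \<phi>)"
  shows "\<not> A2_hypercyclic \<beta> (comp_op \<phi>) \<and> \<not> A2_hypercyclic \<beta> (A2_adjoint \<beta> (comp_op \<phi>))"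
proof -
  note b = assms(1)
  define T where "T = comp_op \<phi>"
  define S where "S = A2_adjoint \<beta> T"
  from assms(4) obtain C where conj: "A2_conjugation \<beta> C" and sym: "\<And>f. f \<in> A2 \<beta> \<Longrightarrow> C (T f) = S (C f)"
    unfolding A2_complex_symmetric_def T_def S_def by blast
  have C1: "\<And>f. f \<in> A2 \<beta> \<Longrightarrow> C f \<in> A2 \<beta>"
    and C2: "\<And>f g. f \<in> A2 \<beta> \<Longrightarrow> g \<in> A2 \<beta> \<Longrightarrow> C (\<lambda>n. f n + g n) = (\<lambda>n. C f n + C g n)"
    and C3: "\<And>c f. f \<in> A2 \<beta> \<Longrightarrow> C (\<lambda>n. c * f n) = (\<lambda>n. cnj c * C f n)"
    and C4: "\<And>f. f \<in> A2 \<beta> \<Longrightarrow> C (C f) = f"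
    and C5: "\<And>f g. f \<in> A2 \<beta> \<Longrightarrow> g \<in> A2 \<beta> \<Longrightarrow> A2_inner \<beta> (C f) (C g) = A2_inner \<beta> g f"
    using conj unfolding A2_conjugation_def by auto
  have TA2: "\<And>f. f \<in> A2 \<beta> \<Longrightarrow> T f \<in> A2 \<beta>"
    unfolding T_def by (rule comp_op_A2[OF b _ assms(2,3)])
  have TnA2: "(T ^^ n) f \<in> A2 \<beta>" if "f \<in> A2 \<beta>" for n f
    by (induction n) (auto simp: that TA2)
  define e0 :: "nat \<Rightarrow> complex" where "e0 = (\<lambda>n. if n = 0 then 1 else 0)"
  have e0A2: "e0 \<in> A2 \<beta>" unfolding e0_def by (rule const_A2)
  have Te0: "T e0 = e0" unfolding e0_def T_def by (rule comp_op_const)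
  have e2: "(\<lambda>n. 2 * e0 n) = (\<lambda>n. if n = 0 then 2 else 0)" unfolding e0_def by (auto simp: fun_eq_iff)
  have e2A2: "(\<lambda>n. 2 * e0 n) \<in> A2 \<beta>" unfolding e2 by (rule const_A2)
  have Te2: "T (\<lambda>n. 2 * e0 n) = (\<lambda>n. 2 * e0 n)" unfolding e2 T_def by (rule comp_op_const)
  define x where "x = C e0"
  have xA2: "x \<in> A2 \<beta>" unfolding x_def by (rule C1[OF e0A2])
  have Sx: "S x = x" unfolding x_def using sym[OF e0A2] Te0 by simp
  have Ce2: "C (\<lambda>n. 2 * e0 n) = (\<lambda>n. 2 * x n)" unfolding x_def using C3[OF e0A2, of 2] by simp
  have S2x: "S (\<lambda>n. 2 * x n) = (\<lambda>n. 2 * x n)" using sym[OF e2A2] Te2 Ce2 by simp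
  have xnz: "x \<noteq> (\<lambda>n. 0)"
  proof
    assume x0: "x = (\<lambda>n. 0)"
    have "C (\<lambda>n. 0 * e0 n) = (\<lambda>n. cnj 0 * C e0 n)" by (rule C3[OF e0A2])
    hence "C (\<lambda>n. 0) = (\<lambda>n. 0)" by simp
    hence "e0 = (\<lambda>n. 0)" using C4[OF e0A2] x0 unfolding x_def by simp
    thus False unfolding e0_def by (metis zero_neq_one)
  qed
  define Pr where "Pr y h \<longleftrightarrow> h \<in> A2 \<beta> \<and> (\<forall>g\<in>A2 \<beta>. A2_inner \<beta> h g = A2_inner \<beta> y (T g))" for y h
  have S_eq: "S y = (THE h. Pr y h)" for y unfolding S_def A2_adjoint_def Pr_def ..
  have uniq: "h1 = h2" if "Pr y h1" "Pr y h2" for y h1 h2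
  proof -
    define d where "d = (\<lambda>n. h1 n - h2 n)"
    have h1: "h1 \<in> A2 \<beta>" and h2: "h2 \<in> A2 \<beta>" using that unfolding Pr_def by auto
    have dA2: "d \<in> A2 \<beta>" unfolding d_def by (rule A2_diff[OF b h1 h2])
    have "A2_inner \<beta> d d = A2_inner \<beta> h1 d - A2_inner \<beta> h2 d"
      unfolding d_def by (rule inner_diff_left[OF b h1 h2]) (fold d_def, rule dA2)
    also have "\<dots> = 0" using that dA2 unfolding Pr_def by simp
    finally have "(\<Sum>n. A2_weight \<beta> n * (cmod (d n))\<^sup>2) = 0" using inner_self[OF b dA2] by simp
    hence "d = (\<lambda>n. 0)" by (rule A2_zero[OF b dA2])
    thus ?thesis unfolding d_def by (auto simp: fun_eq_iff)
  qed
  have ex: "\<exists>h. Pr x h"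
  proof (rule ccontr)
    assume nex: "\<not> (\<exists>h. Pr x h)"
    have nex2: "\<not> (\<exists>h. Pr (\<lambda>n. 2 * x n) h)"
    proof
      assume "\<exists>h. Pr (\<lambda>n. 2 * x n) h"
      then obtain h where h: "Pr (\<lambda>n. 2 * x n) h" by blast
      have hA2: "h \<in> A2 \<beta>" using h unfolding Pr_def by simp
      have "Pr x (\<lambda>n. (1/2) * h n)"
        unfolding Pr_def
      proof (intro conjI ballI)
        show "(\<lambda>n. (1/2) * h n) \<in> A2 \<beta>" by (rule A2_scale[OF b hA2])
        fix g assume g: "g \<in> A2 \<beta>"
        have "A2_inner \<beta> (\<lambda>n. (1/2) * h n) g = (1/2) * A2_inner \<beta> h g" by (rule inner_scale_left[OF b hA2 g])
        also have "A2_inner \<beta> h g = A2_inner \<beta> (\<lambda>n. 2 * x n) (T g)" using h g unfolding Pr_def by simp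
        also have "\<dots> = 2 * A2_inner \<beta> x (T g)" by (rule inner_scale_left[OF b xA2 TA2[OF g]])
        finally show "A2_inner \<beta> (\<lambda>n. (1/2) * h n) g = A2_inner \<beta> x (T g)" by simp
      qed
      thus False using nex by blast
    qed
    have "Pr x = Pr (\<lambda>n. 2 * x n)" using nex nex2 by (auto simp: fun_eq_iff)
    hence "S x = S (\<lambda>n. 2 * x n)" unfolding S_eq by simp
    hence "x = (\<lambda>n. 2 * x n)" using Sx S2x by simp
    hence "x = (\<lambda>n. 0)" by (auto simp: fun_eq_iff)
    thus False using xnz by simp
  qed
  have "Pr x (S x)"
  proof -
    have "\<exists>!h. Pr x h" using ex uniq by blast
    hence "Pr x (THE h. Pr x h)" by (rule theI')
    thus ?thesis unfolding S_eq .
  qed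
  hence adj: "\<And>g. g \<in> A2 \<beta> \<Longrightarrow> A2_inner \<beta> x g = A2_inner \<beta> x (T g)" unfolding Pr_def Sx by simp
  have notT: "\<not> A2_hypercyclic \<beta> T"
  proof
    assume "A2_hypercyclic \<beta> T"
    then obtain f where fA2: "f \<in> A2 \<beta>"
      and dense: "\<And>g e. g \<in> A2 \<beta> \<Longrightarrow> e > 0 \<Longrightarrow> \<exists>n. A2_norm \<beta> (\<lambda>k. (T ^^ n) f k - g k) < e"
      unfolding A2_hypercyclic_def by blast
    define X where "X = (\<Sum>n. A2_weight \<beta> n * (cmod (x n))\<^sup>2)"
    have X0: "X \<ge> 0" unfolding X_def using w_pos[OF b] by (intro suminf_nonneg) (use xA2 in \<open>auto simp: A2_def less_imp_le\<close>)
    have Xp: "X > 0"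
    proof (rule ccontr)
      assume "\<not> X > 0" hence "X = 0" using X0 by simp
      hence "x = (\<lambda>n. 0)" unfolding X_def by (rule A2_zero[OF b xA2])
      thus False using xnz by simp
    qed
    have inv: "A2_inner \<beta> x ((T ^^ n) f) = A2_inner \<beta> x f" for n
    proof (induction n)
      case (Suc n)
      have "A2_inner \<beta> x ((T ^^ Suc n) f) = A2_inner \<beta> x (T ((T ^^ n) f))" by simp
      also have "\<dots> = A2_inner \<beta> x ((T ^^ n) f)" using adj[OF TnA2[OF fA2]] by simp
      finally show ?case using Suc by simp
    qed simp
    define g where "g = (\<lambda>k. f k + x k)"
    have gA2: "g \<in> A2 \<beta>" unfolding g_def by (rule A2_add[OF b fA2 xA2])
    obtain n where n: "A2_norm \<beta> (\<lambda>k. (T ^^ n) f k - g k) < sqrt X"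
      using dense[OF gA2, of "sqrt X"] Xp by auto
    define v where "v = (\<lambda>k. (T ^^ n) f k - g k)"
    have vA2: "v \<in> A2 \<beta>" unfolding v_def by (rule A2_diff[OF b TnA2[OF fA2] gA2])
    have "A2_inner \<beta> x v = A2_inner \<beta> x ((T ^^ n) f) - A2_inner \<beta> x g"
      unfolding v_def by (rule inner_diff_right[OF b xA2 TnA2[OF fA2] gA2])
    also have "A2_inner \<beta> x g = A2_inner \<beta> x f + A2_inner \<beta> x x"
      unfolding g_def by (rule inner_add_right[OF b xA2 fA2 xA2])
    finally have "A2_inner \<beta> x v = - A2_inner \<beta> x x" using inv by simp
    hence "cmod (A2_inner \<beta> x v) = X" using inner_self[OF b xA2] X0 unfolding X_def by simp
    moreover have "2 * cmod (A2_inner \<beta> x v) \<le> X + (\<Sum>k. A2_weight \<beta> k * (cmod (v k))\<^sup>2)"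
      using inner_bound[OF b xA2 vA2] unfolding X_def .
    ultimately have "X \<le> (\<Sum>k. A2_weight \<beta> k * (cmod (v k))\<^sup>2)" by simp
    hence "sqrt X \<le> A2_norm \<beta> v" unfolding A2_norm_def by simp
    thus False using n unfolding v_def by simp
  qed
  have Cdiff: "C (\<lambda>k. u k - g k) = (\<lambda>k. C u k - C g k)" if "u \<in> A2 \<beta>" "g \<in> A2 \<beta>" for u g
  proof -
    have m: "(\<lambda>k. (-1) * g k) \<in> A2 \<beta>" by (rule A2_scale[OF b that(2)])
    have "(\<lambda>k. u k - g k) = (\<lambda>k. u k + (\<lambda>k. (-1) * g k) k)" by simp
    hence "C (\<lambda>k. u k - g k) = (\<lambda>k. C u k + C (\<lambda>k. (-1) * g k) k)" using C2[OF that(1) m] by simp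
    also have "C (\<lambda>k. (-1) * g k) = (\<lambda>k. cnj (-1) * C g k)" by (rule C3[OF that(2)])
    finally show ?thesis by simp
  qed
  have Cnorm: "A2_norm \<beta> (C d) = A2_norm \<beta> d" if d: "d \<in> A2 \<beta>" for d
  proof -
    have "A2_inner \<beta> (C d) (C d) = A2_inner \<beta> d d" by (rule C5[OF d d])
    hence "(of_real (\<Sum>n. A2_weight \<beta> n * (cmod (C d n))\<^sup>2) :: complex) = of_real (\<Sum>n. A2_weight \<beta> n * (cmod (d n))\<^sup>2)"
      using inner_self[OF b d] inner_self[OF b C1[OF d]] by simp
    hence "(\<Sum>n. A2_weight \<beta> n * (cmod (C d n))\<^sup>2) = (\<Sum>n. A2_weight \<beta> n * (cmod (d n))\<^sup>2)"
      by (metis of_real_eq_iff)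
    thus ?thesis unfolding A2_norm_def by simp
  qed
  have notS: "\<not> A2_hypercyclic \<beta> S"
  proof
    assume "A2_hypercyclic \<beta> S"
    then obtain f where fA2: "f \<in> A2 \<beta>"
      and dense: "\<And>g e. g \<in> A2 \<beta> \<Longrightarrow> e > 0 \<Longrightarrow> \<exists>n. A2_norm \<beta> (\<lambda>k. (S ^^ n) f k - g k) < e"
      unfolding A2_hypercyclic_def by blast
    have Sform: "S y = C (T (C y))" if "y \<in> A2 \<beta>" for y
      using sym[OF C1[OF that]] C4[OF that] by simp
    have Sn: "(S ^^ n) f = C ((T ^^ n) (C f))" for n
    proof (induction n)
      case 0 show ?case using C4[OF fA2] by simp
    next
      case (Suc n)
      have inA2: "(T ^^ n) (C f) \<in> A2 \<beta>" by (rule TnA2[OF C1[OF fA2]])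
      have "(S ^^ Suc n) f = S (C ((T ^^ n) (C f)))" using Suc by simp
      also have "\<dots> = C (T (C (C ((T ^^ n) (C f)))))" by (rule Sform[OF C1[OF inA2]])
      also have "\<dots> = C (T ((T ^^ n) (C f)))" using C4[OF inA2] by simp
      finally show ?case by simp
    qed
    have "A2_hypercyclic \<beta> T"
      unfolding A2_hypercyclic_def
    proof (intro bexI ballI allI impI)
      show "C f \<in> A2 \<beta>" by (rule C1[OF fA2])
      fix g :: "nat \<Rightarrow> complex" and e :: real assume g: "g \<in> A2 \<beta>" and e: "e > 0"
      obtain n where n: "A2_norm \<beta> (\<lambda>k. (S ^^ n) f k - C g k) < e" using dense[OF C1[OF g] e] by blast
      have inA2: "(T ^^ n) (C f) \<in> A2 \<beta>" by (rule TnA2[OF C1[OF fA2]])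
      have "(\<lambda>k. (S ^^ n) f k - C g k) = C (\<lambda>k. (T ^^ n) (C f) k - g k)"
        unfolding Sn using Cdiff[OF inA2 g] by simp
      hence "A2_norm \<beta> (\<lambda>k. (S ^^ n) f k - C g k) = A2_norm \<beta> (\<lambda>k. (T ^^ n) (C f) k - g k)"
        using Cnorm[OF A2_diff[OF b inA2 g]] by simp
      with n show "\<exists>n. A2_norm \<beta> (\<lambda>k. (T ^^ n) (C f) k - g k) < e" by auto
    qed
    thus False using notT by simp
  qed
  show ?thesis using notT notS unfolding T_def S_def by simp
qed

end
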